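(* Let $m\geq 3$ be an integer. Then (i) $B_c(m,m+1;8)\geq (2m+1)(m^2-m+2)$; (ii) $B_c(m,m^2+1;8)\geq (m^2+m+1)(m^3-m^2+2)$; (iii) $B_c(m,m+1;12)\geq (2m+1)(m^4-2m^3+2m^2-m+2)$.
   Context: For integers $a,b\geq 2$ and even $g\ge4$, an $(a,b;g)$-bipartite biregular graph is a finite simple bipartite graph of girth exactly $g$ in which all vertices of one bipartition class have degree $a$ and all vertices of the other class have degree $b$. $B_c(a,b;g)$ denotes the minimum order of an $(a,b;g)$-bipartite biregular graph. *)

theory Defs
  imports Main
begin

definition simple_graph :: "'a set \<Rightarrow> ('a \<Rightarrow> 'a \<Rightarrow> bool) \<Rightarrow> bool" where
  "simple_graph V E \<longleftrightarrow> finite V \<and> (\<forall>u v. E u v \<longrightarrow> E v u)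
     \<and> (\<forall>v. \<not> E v v) \<and> (\<forall>u v. E u v \<longrightarrow> u \<in> V \<and> v \<in> V)"

definition degree :: "'a set \<Rightarrow> ('a \<Rightarrow> 'a \<Rightarrow> bool) \<Rightarrow> 'a \<Rightarrow> nat" where
  "degree V E v = card {w \<in> V. E v w}"

definition is_cycle :: "'a set \<Rightarrow> ('a \<Rightarrow> 'a \<Rightarrow> bool) \<Rightarrow> 'a list \<Rightarrow> bool" where
  "is_cycle V E cs \<longleftrightarrow> length cs \<ge> 3 \<and> distinct cs \<and> set cs \<subseteq> V
     \<and> (\<forall>i < length cs. E (cs ! i) (cs ! ((i + 1) mod length cs)))"

definition has_cycle_of_length :: "'a set \<Rightarrow> ('a \<Rightarrow> 'a \<Rightarrow> bool) \<Rightarrow> nat \<Rightarrow> bool" where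
  "has_cycle_of_length V E k \<longleftrightarrow> (\<exists>cs. is_cycle V E cs \<and> length cs = k)"

text \<open>The girth: length of a shortest cycle (meaningful when a cycle exists).\<close>

definition girth :: "'a set \<Rightarrow> ('a \<Rightarrow> 'a \<Rightarrow> bool) \<Rightarrow> nat" where
  "girth V E = (LEAST k. has_cycle_of_length V E k)"

definition bip_biregular :: "'a set \<Rightarrow> ('a \<Rightarrow> 'a \<Rightarrow> bool) \<Rightarrow> nat \<Rightarrow> nat \<Rightarrow> nat \<Rightarrow> bool" where
  "bip_biregular V E a b g \<longleftrightarrow> simple_graph V E
     \<and> (\<exists>X Y. X \<union> Y = V \<and> X \<inter> Y = {}
          \<and> (\<forall>u v. E u v \<longrightarrow> (u \<in> X \<and> v \<in> Y) \<or> (u \<in> Y \<and> v \<in> X))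
          \<and> (\<forall>x \<in> X. degree V E x = a) \<and> (\<forall>y \<in> Y. degree V E y = b))
     \<and> (\<exists>k. has_cycle_of_length V E k) \<and> girth V E = g"

end

theory Submission
  imports Defs "Jordan_Normal_Form.Schur_Decomposition" Complex_Main
begin


definition trm :: "'b::comm_ring_1 mat \<Rightarrow> 'b" where
  "trm A = (\<Sum>i<dim_row A. A $$ (i,i))"

lemma trm_comm:
  fixes A B :: "'b::comm_ring_1 mat"
  assumes "A \<in> carrier_mat n k" "B \<in> carrier_mat k n"
  shows "trm (A * B) = trm (B * A)"
proof -
  have "trm (A * B) = (\<Sum>i<n. \<Sum>j<k. A $$ (i,j) * B $$ (j,i))"
    using assms by (simp add: trm_def scalar_prod_def atLeast0LessThan)
  also have "\<dots> = (\<Sum>j<k. \<Sum>i<n. B $$ (j,i) * A $$ (i,j))"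
    by (subst sum.swap) (simp add: mult.commute)
  also have "\<dots> = trm (B * A)"
    using assms by (simp add: trm_def scalar_prod_def atLeast0LessThan)
  finally show ?thesis .
qed

lemma idem_upper_diag:
  fixes B :: "'b::field mat"
  assumes B: "B \<in> carrier_mat n n" and ut: "upper_triangular B" and idem: "B * B = B"
    and i: "i < n"
  shows "B $$ (i,i) = 0 \<or> B $$ (i,i) = 1"
proof -
  have "(B * B) $$ (i,i) = (\<Sum>j<n. B $$ (i,j) * B $$ (j,i))"
    using B i by (simp add: scalar_prod_def atLeast0LessThan)
  also have "\<dots> = (\<Sum>j\<in>{i}. B $$ (i,j) * B $$ (j,i))"
  proof (rule sum.mono_neutral_right)
    show "\<forall>j\<in>{..<n} - {i}. B $$ (i,j) * B $$ (j,i) = 0"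
    proof
      fix j assume j: "j \<in> {..<n} - {i}"
      show "B $$ (i,j) * B $$ (j,i) = 0"
      proof (cases "j < i")
        case True then show ?thesis using ut B i unfolding upper_triangular_def by auto
      next
        case False then have "i < j" using j by auto
        then show ?thesis using ut B j unfolding upper_triangular_def by auto
      qed
    qed
  qed (use i in auto)
  finally have "B $$ (i,i) * B $$ (i,i) = B $$ (i,i)" using idem by simp
  then show ?thesis by (metis mult_cancel_left1 mult.commute mult_cancel_right1 right_minus_eq  eq_iff_diff_eq_0 mult_right_cancel)
qed

lemma sum_Nats: "(\<And>i. i \<in> I \<Longrightarrow> f i \<in> \<nat>) \<Longrightarrow> sum f I \<in> (\<nat> :: 'b::semiring_1 set)"
  by (induction I rule: infinite_finite_induct) auto

lemma idem_trace_nat_mat: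
  fixes A :: "complex mat"
  assumes A: "A \<in> carrier_mat n n" and idem: "A * A = A"
  shows "trm A \<in> \<nat>"
proof -
  obtain es where cp: "char_poly A = (\<Prod>a\<leftarrow>es. [:- a, 1:])"
    using char_poly_factorized[OF A] by blast
  obtain B P Q where sd: "schur_decomposition A es = (B,P,Q)"
    by (cases "schur_decomposition A es") auto
  from schur_decomposition[OF A cp sd]
  have sim: "similar_mat_wit A B P Q" and ut: "upper_triangular B" by auto
  from sim A have Bc: "B \<in> carrier_mat n n" and Pc: "P \<in> carrier_mat n n"
    and Qc: "Q \<in> carrier_mat n n" and PQ: "P * Q = 1\<^sub>m n" and QP: "Q * P = 1\<^sub>m n"
    and AB: "A = P * B * Q"
    unfolding similar_mat_wit_def Let_def by auto
  have BA: "B = Q * A * P"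
  proof -
    have "Q * A * P = Q * (P * B * Q) * P" using AB by simp
    also have "\<dots> = (Q * P) * B * (Q * P)"
      using Bc Pc Qc by (simp add: assoc_mult_mat[of _ n n _ n _ n])
    also have "\<dots> = B" using QP Bc by simp
    finally show ?thesis by simp
  qed
  have BB: "B * B = B"
  proof -
    have "B * B = Q * A * P * (Q * A * P)" using BA by simp
    also have "\<dots> = Q * A * (P * Q) * A * P"
      using A Pc Qc by (simp add: assoc_mult_mat[of _ n n _ n _ n])
    also have "\<dots> = Q * (A * A) * P"
      using A Pc Qc PQ by (simp add: assoc_mult_mat[of _ n n _ n _ n])
    also have "\<dots> = B" using idem BA by simp
    finally show ?thesis .
  qed
  have "trm A = trm (P * (B * Q))" using AB Pc Bc Qc by (simp add: assoc_mult_mat[of _ n n _ n _ n])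
  also have "\<dots> = trm ((B * Q) * P)" using Pc Bc Qc by (intro trm_comm) auto
  also have "\<dots> = trm B" using Pc Bc Qc QP by (simp add: assoc_mult_mat[of _ n n _ n _ n])
  also have "\<dots> = (\<Sum>i<n. B $$ (i,i))" using Bc by (simp add: trm_def)
  also have "\<dots> \<in> \<nat>"
  proof (rule sum_Nats)
    fix i assume "i \<in> {..<n}"
    then have "B $$ (i,i) = 0 \<or> B $$ (i,i) = 1" using idem_upper_diag[OF Bc ut BB] by auto
    then show "B $$ (i,i) \<in> \<nat>" by auto
  qed
  finally show ?thesis .
qed

lemma idem_trace_nat:
  fixes S :: "'b set" and E :: "'b \<Rightarrow> 'b \<Rightarrow> real"
  assumes fin: "finite S"
    and idem: "\<And>x y. x \<in> S \<Longrightarrow> y \<in> S \<Longrightarrow> (\<Sum>z\<in>S. E x z * E z y) = E x y"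
  shows "(\<Sum>x\<in>S. E x x) \<in> \<nat>"
proof -
  obtain xs where dxs: "distinct xs" and sxs: "set xs = S"
    using finite_distinct_list[OF fin] by blast
  define n where "n = length xs"
  have bij: "bij_betw ((!) xs) {..<n} S" using bij_betw_nth[OF dxs] sxs n_def by auto
  have reind: "\<And>f :: 'b \<Rightarrow> real. (\<Sum>z\<in>S. f z) = (\<Sum>k<n. f (xs ! k))"
    using sum.reindex_bij_betw[OF bij] by metis
  define A :: "complex mat" where "A = mat n n (\<lambda>(i,j). complex_of_real (E (xs!i) (xs!j)))"
  have Ac: "A \<in> carrier_mat n n" unfolding A_def by simp
  have mem: "\<And>i. i < n \<Longrightarrow> xs ! i \<in> S" using sxs n_def by auto
  have "A * A = A"
  proof (rule eq_matI)
    fix i j assume i: "i < dim_row A" and j: "j < dim_col A"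
    then have i': "i < n" and j': "j < n" using Ac by auto
    have "(A * A) $$ (i,j) = (\<Sum>k<n. A $$ (i,k) * A $$ (k,j))"
      using i' j' Ac by (simp add: scalar_prod_def atLeast0LessThan)
    also have "\<dots> = (\<Sum>k<n. complex_of_real (E (xs!i) (xs!k) * E (xs!k) (xs!j)))"
      using i' j' by (intro sum.cong) (auto simp: A_def)
    also have "\<dots> = complex_of_real (\<Sum>k<n. E (xs!i) (xs!k) * E (xs!k) (xs!j))"
      by simp
    also have "(\<Sum>k<n. E (xs!i) (xs!k) * E (xs!k) (xs!j)) = (\<Sum>z\<in>S. E (xs!i) z * E z (xs!j))"
      using reind by simp
    also have "\<dots> = E (xs!i) (xs!j)" using idem mem i' j' by auto
    finally show "(A * A) $$ (i,j) = A $$ (i,j)" using i' j' by (simp add: A_def)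
  qed (use Ac in auto)
  from idem_trace_nat_mat[OF Ac this] have "trm A \<in> \<nat>" .
  moreover have "trm A = complex_of_real (\<Sum>x\<in>S. E x x)"
    using Ac by (simp add: trm_def A_def reind)
  ultimately obtain k where k: "complex_of_real (\<Sum>x\<in>S. E x x) = of_nat k"
    by (auto elim!: Nats_cases)
  then have "(\<Sum>x\<in>S. E x x) = of_nat k"
    by (metis of_real_eq_iff of_real_of_nat_eq)
  then show ?thesis by simp
qed


definition walkf :: "('a \<Rightarrow> 'a \<Rightarrow> bool) \<Rightarrow> (nat \<Rightarrow> 'a) \<Rightarrow> nat \<Rightarrow> bool" where
  "walkf E w l \<longleftrightarrow> (\<forall>i<l. E (w i) (w (Suc i)))"

definition nbf :: "(nat \<Rightarrow> 'a) \<Rightarrow> nat \<Rightarrow> bool" where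
  "nbf w l \<longleftrightarrow> (\<forall>i. i + 2 \<le> l \<longrightarrow> w i \<noteq> w (i + 2))"

lemma closed_walk_cycle:
  assumes sg: "simple_graph V E" and wk: "walkf E w l" and nb: "nbf w l"
    and cl: "w 0 = w l" and l: "1 \<le> l"
  shows "\<exists>k. 3 \<le> k \<and> k \<le> l \<and> has_cycle_of_length V E k"
proof -
  define Q where "Q = (\<lambda>d. 0 < d \<and> (\<exists>i. i + d \<le> l \<and> w i = w (i + d)))"
  have Ql: "Q l" unfolding Q_def using l cl by (intro conjI exI[of _ 0]) auto
  define d where "d = (LEAST d. Q d)"
  have Qd: "Q d" unfolding d_def using Ql by (rule LeastI)
  have dmin: "\<And>d'. Q d' \<Longrightarrow> d \<le> d'" unfolding d_def by (rule Least_le)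
  have dl: "d \<le> l" using dmin[OF Ql] .
  from Qd obtain i where d0: "0 < d" and id: "i + d \<le> l" and wi: "w i = w (i + d)"
    unfolding Q_def by blast
  have irr: "\<And>v. \<not> E v v" using sg unfolding simple_graph_def by auto
  have sym: "\<And>u v. E u v \<Longrightarrow> E v u" using sg unfolding simple_graph_def by auto
  have inV: "\<And>u v. E u v \<Longrightarrow> u \<in> V \<and> v \<in> V" using sg unfolding simple_graph_def by auto
  have d1: "d \<noteq> 1"
  proof
    assume "d = 1"
    then have "E (w i) (w (i + d))" using wk id unfolding walkf_def by auto
    then show False using wi irr by simp
  qed
  have d2: "d \<noteq> 2"
  proof
    assume "d = 2"
    then show False using nb id wi unfolding nbf_def by auto
  qed
  have d3: "3 \<le> d" using d0 d1 d2 by linarith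
  define cs where "cs = map (\<lambda>k. w (i + k)) [0..<d]"
  have lcs: "length cs = d" unfolding cs_def by simp
  have ncs: "\<And>k. k < d \<Longrightarrow> cs ! k = w (i + k)" unfolding cs_def by simp
  have dist: "distinct cs"
  proof (rule ccontr)
    assume "\<not> distinct cs"
    then obtain p q where pq: "p < q" "q < d" "cs ! p = cs ! q"
      using lcs unfolding distinct_conv_nth by (metis linorder_neqE_nat)
    then have "w (i + p) = w ((i + p) + (q - p))" using ncs by auto
    moreover have "(i + p) + (q - p) \<le> l" using pq id by auto
    ultimately have "Q (q - p)" unfolding Q_def using pq by (intro conjI exI[of _ "i+p"]) auto
    then have "d \<le> q - p" by (rule dmin)
    then show False using pq by auto
  qed
  have adj: "\<forall>k < length cs. E (cs ! k) (cs ! ((k + 1) mod length cs))"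
  proof (intro allI impI)
    fix k assume k: "k < length cs"
    show "E (cs ! k) (cs ! ((k + 1) mod length cs))"
    proof (cases "k + 1 < d")
      case True
      then have "E (w (i + k)) (w (Suc (i + k)))" using wk id unfolding walkf_def by auto
      then show ?thesis using True k lcs ncs by auto
    next
      case False
      then have kd: "k + 1 = d" using k lcs by auto
      then have "E (w (i + k)) (w (Suc (i + k)))" using wk id unfolding walkf_def by auto
      moreover have "Suc (i + k) = i + d" using kd by auto
      ultimately have "E (w (i + k)) (w i)" using wi by simp
      then show ?thesis using kd k lcs ncs d0 by auto
    qed
  qed
  have setV: "set cs \<subseteq> V"
  proof
    fix v assume "v \<in> set cs"
    then obtain k where k: "k < length cs" "cs ! k = v" by (auto simp: in_set_conv_nth)
    then show "v \<in> V" using adj inV by blast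
  qed
  have "is_cycle V E cs" unfolding is_cycle_def using lcs d3 dist setV adj by auto
  then show ?thesis using d3 dl lcs unfolding has_cycle_of_length_def by blast
qed

lemma nb_unique:
  assumes sg: "simple_graph V E"
    and nocyc: "\<And>k. 3 \<le> k \<Longrightarrow> k \<le> L \<Longrightarrow> \<not> has_cycle_of_length V E k"
  shows "walkf E w p \<Longrightarrow> nbf w p \<Longrightarrow> walkf E w' q \<Longrightarrow> nbf w' q \<Longrightarrow> w 0 = w' 0
     \<Longrightarrow> w p = w' q \<Longrightarrow> p + q \<le> L \<Longrightarrow> p = q \<and> (\<forall>i\<le>p. w i = w' i)"
proof (induction p arbitrary: q)
  case 0
  show ?case
  proof (cases q)
    case 0 then show ?thesis using "0.prems" by auto
  next
    case (Suc q')
    have "\<exists>k. 3 \<le> k \<and> k \<le> q \<and> has_cycle_of_length V E k"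
      using closed_walk_cycle[OF sg "0.prems"(3,4)] "0.prems"(5,6) Suc by auto
    then show ?thesis using nocyc "0.prems"(7) by force
  qed
next
  case (Suc p)
  have sym: "\<And>u v. E u v \<Longrightarrow> E v u" using sg unfolding simple_graph_def by auto
  show ?case
  proof (cases q)
    case 0
    have "\<exists>k. 3 \<le> k \<and> k \<le> Suc p \<and> has_cycle_of_length V E k"
      using closed_walk_cycle[OF sg Suc.prems(1,2)] Suc.prems(5,6) 0 by auto
    then show ?thesis using nocyc Suc.prems(7) 0 by force
  next
    case (Suc q')
    show ?thesis
    proof (cases "w p = w' q'")
      case True
      have "walkf E w p" using Suc.prems(1) unfolding walkf_def by auto
      moreover have "nbf w p" using Suc.prems(2) unfolding nbf_def by auto
      moreover have "walkf E w' q'" using Suc.prems(3) Suc unfolding walkf_def by auto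
      moreover have "nbf w' q'" using Suc.prems(4) Suc unfolding nbf_def by auto
      ultimately have "p = q' \<and> (\<forall>i\<le>p. w i = w' i)"
        using Suc.IH[of q'] Suc.prems(5,7) True Suc by auto
      then show ?thesis using Suc.prems(6) Suc by (auto simp: le_Suc_eq)
    next
      case False
      define z where "z = (\<lambda>i. if i \<le> Suc p then w i else w' (Suc p + q - i))"
      have zw: "walkf E z (Suc p + q)" unfolding walkf_def
      proof (intro allI impI)
        fix i assume i: "i < Suc p + q"
        show "E (z i) (z (Suc i))"
        proof (cases "i < Suc p")
          case True then show ?thesis using Suc.prems(1) unfolding z_def walkf_def by auto
        next
          case False
          then have "E (w' (Suc p + q - Suc i)) (w' (Suc (Suc p + q - Suc i)))"
            using Suc.prems(3) i unfolding walkf_def by auto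
          moreover have "Suc (Suc p + q - Suc i) = Suc p + q - i" using i False by auto
          moreover have "i = Suc p \<longrightarrow> w' (Suc p + q - i) = w (Suc p)" using Suc.prems(6) by auto
          ultimately show ?thesis using False unfolding z_def by (auto intro: sym)
        qed
      qed
      have znb: "nbf z (Suc p + q)" unfolding nbf_def
      proof (intro allI impI)
        fix i assume i: "i + 2 \<le> Suc p + q"
        show "z i \<noteq> z (i + 2)"
        proof (cases "i + 2 \<le> Suc p")
          case True then show ?thesis using Suc.prems(2) unfolding z_def nbf_def by auto
        next
          case F1: False
          show ?thesis
          proof (cases "i = p")
            case True
            then show ?thesis using False Suc unfolding z_def by auto
          next
            case F2: False
            show ?thesis
            proof (cases "i = Suc p")
              case True
              then have "w' (q - 2) \<noteq> w' (q - 2 + 2)" using Suc.prems(4) i unfolding nbf_def by auto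
              moreover have "q - 2 + 2 = q" using True i by auto
              ultimately show ?thesis using True i Suc.prems(6) unfolding z_def by auto
            next
              case False
              then have ip: "Suc p < i" using F1 F2 by auto
              have "w' (Suc p + q - (i + 2)) \<noteq> w' (Suc p + q - (i + 2) + 2)"
                using Suc.prems(4) i ip unfolding nbf_def by auto
              moreover have "Suc p + q - (i + 2) + 2 = Suc p + q - i" using i by auto
              ultimately show ?thesis using ip unfolding z_def by auto
            qed
          qed
        qed
      qed
      have "z 0 = z (Suc p + q)" using Suc.prems(5) Suc unfolding z_def by auto
      then have "\<exists>k. 3 \<le> k \<and> k \<le> Suc p + q \<and> has_cycle_of_length V E k"
        using closed_walk_cycle[OF sg zw znb] by auto
      then show ?thesis using nocyc Suc.prems(7) by force
    qed
  qed
qed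


lemma walkf_Cons: "walkf E (nth (a # b # ws)) (Suc n) \<longleftrightarrow> E a b \<and> walkf E (nth (b # ws)) n"
  unfolding walkf_def by (auto simp: less_Suc_eq_0_disj)

lemma walkf_0: "walkf E w 0" unfolding walkf_def by auto

lemma nbf_Cons: "nbf (nth (a # b # c # ws)) (Suc (Suc n)) \<longleftrightarrow> a \<noteq> c \<and> nbf (nth (b # c # ws)) (Suc n)"
  unfolding nbf_def
  apply (auto simp: less_Suc_eq_0_disj)
  apply (case_tac i) apply auto
  done

lemma nbf_1: "nbf w (Suc 0)" and nbf_0: "nbf w 0" unfolding nbf_def by auto

lemmas walk_simps = walkf_Cons walkf_0 nbf_Cons nbf_1 nbf_0 numeral_eq_Suc

lemma test: "walkf E (nth [x,y,z,u]) 3 \<longleftrightarrow> E x y \<and> E y z \<and> E z u"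
  by (simp add: walk_simps)
lemma test2: "nbf (nth [x,y,z,u]) 3 \<longleftrightarrow> x \<noteq> z \<and> y \<noteq> u"
  by (simp add: walk_simps)


locale bbg =
  fixes V :: "'a set" and E :: "'a \<Rightarrow> 'a \<Rightarrow> bool" and X Y :: "'a set" and m b L :: nat
  assumes sg: "simple_graph V E"
    and XYV: "X \<union> Y = V" and XYd: "X \<inter> Y = {}"
    and bip: "\<And>u v. E u v \<Longrightarrow> (u \<in> X \<and> v \<in> Y) \<or> (u \<in> Y \<and> v \<in> X)"
    and degX: "\<And>x. x \<in> X \<Longrightarrow> Defs.degree V E x = m"
    and degY: "\<And>y. y \<in> Y \<Longrightarrow> Defs.degree V E y = b"
    and nocyc: "\<And>k. 3 \<le> k \<Longrightarrow> k \<le> L \<Longrightarrow> \<not> has_cycle_of_length V E k"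
begin

lemma finV: "finite V" using sg unfolding simple_graph_def by auto
lemma finX: "finite X" using finV XYV by auto
lemma finY: "finite Y" using finV XYV by auto
lemma Esym: "E u v \<Longrightarrow> E v u" using sg unfolding simple_graph_def by auto

definition a :: "'a \<Rightarrow> 'a \<Rightarrow> real" where "a u v = (if E u v then 1 else 0)"

lemma a_sym: "a u v = a v u" unfolding a_def using Esym by auto
lemma a_sq: "a u v * a u v = a u v" unfolding a_def by auto
lemma a_sq': "a u v * a v u = a u v" unfolding a_def using Esym by auto
lemma a01: "a u v = 0 \<or> a u v = 1" unfolding a_def by auto
lemma a_ge0: "0 \<le> a u v" unfolding a_def by auto

lemma sum_a_card: "(\<Sum>y\<in>S. a x y) = real (card {y\<in>S. E x y})" if "finite S" for S x
proof -
  have "(\<Sum>y\<in>S. a x y) = (\<Sum>y\<in>S. if E x y then 1 else 0)" by (simp add: a_def)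
  also have "\<dots> = (\<Sum>y\<in>{y\<in>S. E x y}. 1)"
    by (simp only: sum.inter_filter[OF that])
  finally show ?thesis by simp
qed

lemma sumY_a: "x \<in> X \<Longrightarrow> (\<Sum>y\<in>Y. a x y) = real m"
proof -
  assume x: "x \<in> X"
  have "{y\<in>Y. E x y} = {w\<in>V. E x w}" using bip XYV XYd x by blast
  then show ?thesis using sum_a_card[OF finY] degX[OF x] unfolding Defs.degree_def by simp
qed

lemma sumX_a: "y \<in> Y \<Longrightarrow> (\<Sum>x\<in>X. a y x) = real b"
proof -
  assume y: "y \<in> Y"
  have "{x\<in>X. E y x} = {w\<in>V. E y w}" using bip XYV XYd y by blast
  then show ?thesis using sum_a_card[OF finX] degY[OF y] unfolding Defs.degree_def by simp
qed

lemma sumY_a': "x \<in> X \<Longrightarrow> (\<Sum>y\<in>Y. a y x) = real m"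
proof -
  assume x: "x \<in> X"
  have "(\<Sum>y\<in>Y. a y x) = (\<Sum>y\<in>Y. a x y)" by (intro sum.cong refl) (rule a_sym)
  then show ?thesis using sumY_a[OF x] by simp
qed
lemma sumX_a': "y \<in> Y \<Longrightarrow> (\<Sum>x\<in>X. a x y) = real b"
proof -
  assume y: "y \<in> Y"
  have "(\<Sum>x\<in>X. a x y) = (\<Sum>x\<in>X. a y x)" by (intro sum.cong refl) (rule a_sym)
  then show ?thesis using sumX_a[OF y] by simp
qed

definition Px :: "'a \<Rightarrow> 'a \<Rightarrow> real" where "Px x x' = (\<Sum>y\<in>Y. a x y * a y x')"
definition PN :: "'a \<Rightarrow> 'a \<Rightarrow> real" where "PN x y = (\<Sum>x'\<in>X. Px x x' * a x' y)"
definition nb3 :: "'a \<Rightarrow> 'a \<Rightarrow> real" where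
  "nb3 x y = (\<Sum>y1\<in>Y-{y}. \<Sum>x1\<in>X-{x}. a x y1 * a y1 x1 * a x1 y)"
definition nb5 :: "'a \<Rightarrow> 'a \<Rightarrow> real" where
  "nb5 x y = (\<Sum>y1\<in>Y. \<Sum>x1\<in>X-{x}. \<Sum>y2\<in>Y-{y1,y}. \<Sum>x2\<in>X-{x1}.
      a x y1 * a y1 x1 * a x1 y2 * a y2 x2 * a x2 y)"
definition Pnb3 :: "'a \<Rightarrow> 'a \<Rightarrow> real" where "Pnb3 x y = (\<Sum>x'\<in>X. Px x x' * nb3 x' y)"

lemma Px_diag: "x \<in> X \<Longrightarrow> Px x x = real m"
  unfolding Px_def by (simp add: a_sq' sumY_a)

lemma I1:
  assumes x: "x \<in> X" and y: "y \<in> Y"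
  shows "PN x y = nb3 x y + (real m + real b - 1) * a x y"
proof -
  have "PN x y = (\<Sum>x'\<in>X. \<Sum>y1\<in>Y. a x y1 * a y1 x' * a x' y)"
    unfolding PN_def Px_def by (simp add: sum_distrib_right)
  also have "\<dots> = (\<Sum>y1\<in>Y. \<Sum>x'\<in>X. a x y1 * a y1 x' * a x' y)"
    by (rule sum.swap)
  also have "\<dots> = (\<Sum>y1\<in>Y. a x y1 * a y1 x * a x y + (\<Sum>x'\<in>X-{x}. a x y1 * a y1 x' * a x' y))"
    by (intro sum.cong refl sum.remove[OF finX x])
  also have "\<dots> = real m * a x y + (\<Sum>y1\<in>Y. \<Sum>x'\<in>X-{x}. a x y1 * a y1 x' * a x' y)"
    by (simp add: sum.distrib a_sq' sum_distrib_right[symmetric] sumY_a x)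
  also have "(\<Sum>y1\<in>Y. \<Sum>x'\<in>X-{x}. a x y1 * a y1 x' * a x' y)
      = (\<Sum>x'\<in>X-{x}. a x y * a y x' * a x' y) + nb3 x y"
    unfolding nb3_def by (rule sum.remove[OF finY y])
  also have "(\<Sum>x'\<in>X-{x}. a x y * a y x' * a x' y) = a x y * (\<Sum>x'\<in>X-{x}. a y x')"
    by (simp add: sum_distrib_left mult.assoc a_sq')
  also have "(\<Sum>x'\<in>X-{x}. a y x') = real b - a y x"
    using sum_diff1[OF finX, of "a y" x] x sumX_a[OF y] by simp
  also have "a x y * (real b - a y x) = (real b - 1) * a x y"
    using a01[of x y] by (auto simp: a_sym[of y x])
  finally show ?thesis by (simp add: algebra_simps)
qed

lemma a_mul_deg: "a u v * (c - a u v) = (c - 1) * a u v"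
  using a01[of u v] by auto

lemma I2:
  assumes x: "x \<in> X" and y: "y \<in> Y"
  shows "Pnb3 x y = (real m + real b - 2) * nb3 x y + nb5 x y + (real m - 1) * (real b - 1) * a x y"
proof -
  define F where "F = (\<lambda>y' x' y1 x1. a x y' * a y' x' * a x' y1 * a y1 x1 * a x1 y)"
  have "Pnb3 x y = Px x x * nb3 x y + (\<Sum>x'\<in>X-{x}. Px x x' * nb3 x' y)"
    unfolding Pnb3_def by (rule sum.remove[OF finX x])
  also have "Px x x * nb3 x y = real m * nb3 x y" using Px_diag[OF x] by simp
  also have "(\<Sum>x'\<in>X-{x}. Px x x' * nb3 x' y)
      = (\<Sum>x'\<in>X-{x}. \<Sum>y'\<in>Y. \<Sum>y1\<in>Y-{y}. \<Sum>x1\<in>X-{x'}. F y' x' y1 x1)"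
    unfolding Px_def nb3_def F_def
    by (intro sum.cong refl, subst sum_product, intro sum.cong refl) (simp add: sum_distrib_left mult.assoc)
  also have "\<dots> = (\<Sum>y'\<in>Y. \<Sum>x'\<in>X-{x}. \<Sum>y1\<in>Y-{y}. \<Sum>x1\<in>X-{x'}. F y' x' y1 x1)"
    by (rule sum.swap)
  also have "\<dots> = (\<Sum>y'\<in>Y. (\<Sum>x'\<in>X-{x}. \<Sum>y1\<in>Y-{y',y}. \<Sum>x1\<in>X-{x'}. F y' x' y1 x1)
        + (if y' \<noteq> y then (\<Sum>x'\<in>X-{x}. \<Sum>x1\<in>X-{x'}. F y' x' y' x1) else 0))"
  proof (intro sum.cong refl)
    fix y' assume y': "y' \<in> Y"
    have "(\<Sum>x'\<in>X-{x}. \<Sum>y1\<in>Y-{y}. \<Sum>x1\<in>X-{x'}. F y' x' y1 x1)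
        = (\<Sum>x'\<in>X-{x}. (\<Sum>y1\<in>Y-{y',y}. \<Sum>x1\<in>X-{x'}. F y' x' y1 x1)
             + (if y' \<noteq> y then (\<Sum>x1\<in>X-{x'}. F y' x' y' x1) else 0))"
    proof (intro sum.cong refl)
      fix x' assume "x' \<in> X - {x}"
      show "(\<Sum>y1\<in>Y-{y}. \<Sum>x1\<in>X-{x'}. F y' x' y1 x1)
           = (\<Sum>y1\<in>Y-{y',y}. \<Sum>x1\<in>X-{x'}. F y' x' y1 x1)
             + (if y' \<noteq> y then (\<Sum>x1\<in>X-{x'}. F y' x' y' x1) else 0)"
      proof (cases "y' = y")
        case True then show ?thesis by simp
      next
        case False
        then have "y' \<in> Y - {y}" using y' by auto
        from sum.remove[OF _ this, of "\<lambda>y1. \<Sum>x1\<in>X-{x'}. F y' x' y1 x1"] finY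
        have "(\<Sum>y1\<in>Y-{y}. \<Sum>x1\<in>X-{x'}. F y' x' y1 x1)
           = (\<Sum>x1\<in>X-{x'}. F y' x' y' x1) + (\<Sum>y1\<in>Y-{y}-{y'}. \<Sum>x1\<in>X-{x'}. F y' x' y1 x1)"
          by auto
        moreover have "Y - {y} - {y'} = Y - {y', y}" by auto
        ultimately show ?thesis using False by simp
      qed
    qed
    also have "\<dots> = (\<Sum>x'\<in>X-{x}. \<Sum>y1\<in>Y-{y',y}. \<Sum>x1\<in>X-{x'}. F y' x' y1 x1)
        + (if y' \<noteq> y then (\<Sum>x'\<in>X-{x}. \<Sum>x1\<in>X-{x'}. F y' x' y' x1) else 0)"
      by (simp add: sum.distrib)
    finally show "(\<Sum>x'\<in>X-{x}. \<Sum>y1\<in>Y-{y}. \<Sum>x1\<in>X-{x'}. F y' x' y1 x1) = \<dots>" .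
  qed
  also have "\<dots> = nb5 x y + (\<Sum>y'\<in>Y. if y' \<noteq> y then (\<Sum>x'\<in>X-{x}. \<Sum>x1\<in>X-{x'}. F y' x' y' x1) else 0)"
    unfolding nb5_def F_def by (simp add: sum.distrib)
  also have "(\<Sum>y'\<in>Y. if y' \<noteq> y then (\<Sum>x'\<in>X-{x}. \<Sum>x1\<in>X-{x'}. F y' x' y' x1) else 0)
      = (\<Sum>y'\<in>Y-{y}. (\<Sum>x'\<in>X-{x}. \<Sum>x1\<in>X-{x'}. F y' x' y' x1))"
  proof -
    have "{y'\<in>Y. y' \<noteq> y} = Y - {y}" by auto
    then show ?thesis using sum.inter_filter[OF finY, of "\<lambda>y'. \<Sum>x'\<in>X-{x}. \<Sum>x1\<in>X-{x'}. F y' x' y' x1" "\<lambda>y'. y' \<noteq> y"]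
      by simp
  qed
  also have "\<dots> = (\<Sum>y'\<in>Y-{y}. (real b - 2) * (a x y' * (\<Sum>x1\<in>X. a y' x1 * a x1 y)) + a x y' * a x y)"
  proof (intro sum.cong refl)
    fix y' assume y': "y' \<in> Y - {y}"
    define U where "U = (\<Sum>x1\<in>X. a y' x1 * a x1 y)"
    have "(\<Sum>x'\<in>X-{x}. \<Sum>x1\<in>X-{x'}. F y' x' y' x1)
        = (\<Sum>x'\<in>X-{x}. a x y' * (a y' x' * (\<Sum>x1\<in>X-{x'}. a y' x1 * a x1 y)))"
      unfolding F_def
      by (intro sum.cong refl) (simp add: sum_distrib_left mult.assoc a_sq' mult.left_commute[of "a x' y'"] a_sym[of x' y'])
    also have "\<dots> = (\<Sum>x'\<in>X-{x}. a x y' * (a y' x' * U - a y' x' * a x' y))"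
    proof (intro sum.cong refl)
      fix x' assume "x' \<in> X - {x}"
      then have "(\<Sum>x1\<in>X-{x'}. a y' x1 * a x1 y) = U - a y' x' * a x' y"
        using sum_diff1[OF finX, of "\<lambda>x1. a y' x1 * a x1 y" x'] unfolding U_def by auto
      moreover have sq: "a y' x' * (a y' x' * a x' y) = a y' x' * a x' y"
        by (simp add: mult.assoc[symmetric] a_sq)
      ultimately show "a x y' * (a y' x' * (\<Sum>x1\<in>X-{x'}. a y' x1 * a x1 y)) = a x y' * (a y' x' * U - a y' x' * a x' y)"
        by (simp only: right_diff_distrib)
    qed
    also have "\<dots> = a x y' * ((\<Sum>x'\<in>X-{x}. a y' x') * U - (\<Sum>x'\<in>X-{x}. a y' x' * a x' y))"
      by (simp add: sum_distrib_left sum_distrib_right sum_subtractf algebra_simps)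
    also have "(\<Sum>x'\<in>X-{x}. a y' x') = real b - a y' x"
      using sum_diff1[OF finX, of "a y'" x] x sumX_a y' by auto
    also have "(\<Sum>x'\<in>X-{x}. a y' x' * a x' y) = U - a y' x * a x y"
      using sum_diff1[OF finX, of "\<lambda>x1. a y' x1 * a x1 y" x] x unfolding U_def by auto
    also have "a x y' * ((real b - a y' x) * U - (U - a y' x * a x y))
        = (real b - 2) * (a x y' * U) + a x y' * a x y"
      using a01[of x y'] a_sym[of y' x] by (auto simp: algebra_simps)
    finally show "(\<Sum>x'\<in>X-{x}. \<Sum>x1\<in>X-{x'}. F y' x' y' x1)
        = (real b - 2) * (a x y' * (\<Sum>x1\<in>X. a y' x1 * a x1 y)) + a x y' * a x y"
      unfolding U_def .
  qed
  also have "\<dots> = (real b - 2) * (\<Sum>y'\<in>Y-{y}. \<Sum>x1\<in>X. a x y' * a y' x1 * a x1 y)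
       + (\<Sum>y'\<in>Y-{y}. a x y') * a x y"
    by (simp add: sum.distrib sum_distrib_left sum_distrib_right mult.assoc)
  also have "(\<Sum>y'\<in>Y-{y}. a x y') = real m - a x y"
    using sum_diff1[OF finY, of "a x" y] y sumY_a x by auto
  also have "(\<Sum>y'\<in>Y-{y}. \<Sum>x1\<in>X. a x y' * a y' x1 * a x1 y)
      = (\<Sum>y'\<in>Y-{y}. a x y' * a y' x * a x y + (\<Sum>x1\<in>X-{x}. a x y' * a y' x1 * a x1 y))"
    by (intro sum.cong refl sum.remove[OF finX x])
  also have "\<dots> = (\<Sum>y'\<in>Y-{y}. a x y') * a x y + nb3 x y"
    unfolding nb3_def by (simp add: sum.distrib sum_distrib_right a_sq')
  finally have "Pnb3 x y = real m * nb3 x y + (nb5 x y + ((real b - 2) * ((real m - a x y) * a x y + nb3 x y) + (real m - a x y) * a x y))"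
    using sum_diff1[OF finY, of "a x" y] y sumY_a x by auto
  moreover have "(real m - a x y) * a x y = (real m - 1) * a x y"
    using a01[of x y] by auto
  ultimately show ?thesis using a_sq[of x y] by (simp add: algebra_simps)
qed

end


lemma sum01:
  fixes f :: "'b \<Rightarrow> real"
  assumes fin: "finite S" and f01: "\<And>p. p \<in> S \<Longrightarrow> f p = 0 \<or> f p = 1"
    and uniq: "\<And>p q. p \<in> S \<Longrightarrow> q \<in> S \<Longrightarrow> f p = 1 \<Longrightarrow> f q = 1 \<Longrightarrow> p = q"
  shows "sum f S = 0 \<or> sum f S = 1"
proof (cases "\<exists>p\<in>S. f p = 1")
  case True
  then obtain p where p: "p \<in> S" "f p = 1" by auto
  have "sum f S = f p + sum f (S - {p})" using sum.remove[OF fin p(1)] .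
  moreover have "sum f (S - {p}) = 0"
  proof (rule sum.neutral, intro ballI)
    fix q assume q: "q \<in> S - {p}"
    show "f q = 0"
    proof (rule ccontr)
      assume "f q \<noteq> 0"
      then have "f q = 1" using f01[of q] q by auto
      then have "p = q" using uniq[of p q] p q by auto
      then show False using q by auto
    qed
  qed
  ultimately show ?thesis using p by simp
next
  case False
  have "sum f S = 0"
  proof (rule sum.neutral, intro ballI)
    fix q assume q: "q \<in> S"
    show "f q = 0" using f01[OF q] False q by auto
  qed
  then show ?thesis by simp
qed

lemma sum_ne0_ex: "sum f S \<noteq> (0::real) \<Longrightarrow> \<exists>p\<in>S. f p \<noteq> 0"
proof (rule ccontr)
  assume "sum f S \<noteq> 0" "\<not> (\<exists>p\<in>S. f p \<noteq> 0)"
  then show False using sum.neutral[of S f] by auto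
qed

lemma sum_Sigma2:
  assumes "finite A" "\<And>a. finite (B a)"
  shows "(\<Sum>a\<in>A. \<Sum>b\<in>B a. f a b) = (\<Sum>p\<in>Sigma A B. f (fst p) (snd p))"
  using sum.Sigma[of A B "\<lambda>a b. f a b"] assms by (simp add: split_def)

lemma sum_Sigma4:
  assumes "finite A" "\<And>a. finite (B a)" "\<And>a b. finite (C a b)" "\<And>a b c. finite (D a b c)"
  shows "(\<Sum>a\<in>A. \<Sum>b\<in>B a. \<Sum>c\<in>C a b. \<Sum>d\<in>D a b c. (f a b c d :: real))
     = (\<Sum>p\<in>Sigma A (\<lambda>a. Sigma (B a) (\<lambda>b. Sigma (C a b) (D a b))).
          f (fst p) (fst (snd p)) (fst (snd (snd p))) (snd (snd (snd p))))"
proof -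
  have "(\<Sum>a\<in>A. \<Sum>b\<in>B a. \<Sum>c\<in>C a b. \<Sum>d\<in>D a b c. f a b c d)
      = (\<Sum>a\<in>A. \<Sum>b\<in>B a. \<Sum>q\<in>Sigma (C a b) (D a b). f a b (fst q) (snd q))"
    by (intro sum.cong refl sum_Sigma2) (use assms in auto)
  also have "\<dots> = (\<Sum>a\<in>A. \<Sum>r\<in>Sigma (B a) (\<lambda>b. Sigma (C a b) (D a b)). f a (fst r) (fst (snd r)) (snd (snd r)))"
    by (intro sum.cong refl sum_Sigma2) (use assms in auto)
  also have "\<dots> = (\<Sum>p\<in>Sigma A (\<lambda>a. Sigma (B a) (\<lambda>b. Sigma (C a b) (D a b))). f (fst p) (fst (snd p)) (fst (snd (snd p))) (snd (snd (snd p))))"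
    by (intro sum_Sigma2) (use assms in auto)
  finally show ?thesis .
qed

context bbg begin

lemma paths_eq:
  "walkf E (nth ws) p \<Longrightarrow> nbf (nth ws) p \<Longrightarrow> walkf E (nth ws') q \<Longrightarrow> nbf (nth ws') q
   \<Longrightarrow> ws!0 = ws'!0 \<Longrightarrow> ws!p = ws'!q \<Longrightarrow> p + q \<le> L \<Longrightarrow> p = q \<and> (\<forall>i\<le>p. ws!i = ws'!i)"
  using nb_unique[OF sg nocyc, where w="nth ws" and p=p and w'="nth ws'" and q=q] by blast

lemma prod3: "a u v * a v w * a w z \<noteq> 0 \<Longrightarrow> E u v \<and> E v w \<and> E w z"
  unfolding a_def by (auto split: if_splits)
lemma prod3_01: "a u v * a v w * a w z = 0 \<or> a u v * a v w * a w z = 1"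
  unfolding a_def by auto
lemma prod5: "a u v * a v w * a w z * a z s * a s t \<noteq> 0 \<Longrightarrow> E u v \<and> E v w \<and> E w z \<and> E z s \<and> E s t"
  unfolding a_def by (auto split: if_splits)
lemma prod5_01: "a u v * a v w * a w z * a z s * a s t = 0 \<or> a u v * a v w * a w z * a z s * a s t = 1"
  unfolding a_def by auto

lemma nb3_flat: "nb3 x y = (\<Sum>p\<in>(Y-{y}) \<times> (X-{x}). a x (fst p) * a (fst p) (snd p) * a (snd p) y)"
  unfolding nb3_def using finX finY by (intro sum_Sigma2) auto

definition S5 where "S5 x y = Sigma Y (\<lambda>y1. Sigma (X-{x}) (\<lambda>x1. Sigma (Y-{y1,y}) (\<lambda>y2. X-{x1})))"

lemma nb5_flat: "nb5 x y = (\<Sum>p\<in>S5 x y.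
   a x (fst p) * a (fst p) (fst (snd p)) * a (fst (snd p)) (fst (snd (snd p)))
     * a (fst (snd (snd p))) (snd (snd (snd p))) * a (snd (snd (snd p))) y)"
  unfolding nb5_def S5_def using finX finY by (intro sum_Sigma4) auto

lemma finS5: "finite (S5 x y)" unfolding S5_def using finX finY by auto

lemma nb3_01:
  assumes L: "6 \<le> L"
  shows "nb3 x y = 0 \<or> nb3 x y = 1"
  unfolding nb3_flat
proof (rule sum01)
  show "finite ((Y-{y}) \<times> (X-{x}))" using finX finY by auto
  fix p q assume p: "p \<in> (Y-{y}) \<times> (X-{x})" and q: "q \<in> (Y-{y}) \<times> (X-{x})"
    and fp: "a x (fst p) * a (fst p) (snd p) * a (snd p) y = 1"
    and fq: "a x (fst q) * a (fst q) (snd q) * a (snd q) y = 1"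
  obtain y1 x1 where pp: "p = (y1, x1)" by (cases p)
  obtain y1' x1' where qq: "q = (y1', x1')" by (cases q)
  have "a x y1 * a y1 x1 * a x1 y \<noteq> 0" using fp pp by simp
  then have e1: "E x y1 \<and> E y1 x1 \<and> E x1 y" by (rule prod3)
  have "a x y1' * a y1' x1' * a x1' y \<noteq> 0" using fq qq by simp
  then have e2: "E x y1' \<and> E y1' x1' \<and> E x1' y" by (rule prod3)
  have ne: "x \<noteq> x1" "y1 \<noteq> y" "x \<noteq> x1'" "y1' \<noteq> y" using p q pp qq by auto
  have "3 = (3::nat) \<and> (\<forall>i\<le>3. [x,y1,x1,y]!i = [x,y1',x1',y]!i)"
    by (rule paths_eq) (use e1 e2 ne L in \<open>simp_all add: walk_simps\<close>)
  then have h: "\<forall>i\<le>3. [x,y1,x1,y]!i = [x,y1',x1',y]!i" by simp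
  have "y1 = y1'" using h[rule_format, of 1] by simp
  moreover have "x1 = x1'" using h[rule_format, of 2] by simp
  ultimately show "p = q" using pp qq by simp
qed (rule prod3_01)

lemma nb3_a:
  assumes L: "4 \<le> L"
  shows "nb3 x y * a x y = 0"
proof (rule ccontr)
  assume "nb3 x y * a x y \<noteq> 0"
  then have n: "nb3 x y \<noteq> 0" and e: "E x y" by (auto simp: a_def split: if_splits)
  from sum_ne0_ex[OF n[unfolded nb3_flat]] obtain p where p: "p \<in> (Y-{y}) \<times> (X-{x})"
    and fp: "a x (fst p) * a (fst p) (snd p) * a (snd p) y \<noteq> 0" by blast
  obtain y1 x1 where pp: "p = (y1, x1)" by (cases p)
  have e1: "E x y1 \<and> E y1 x1 \<and> E x1 y" using fp pp by (intro prod3) simp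
  have ne: "x \<noteq> x1" "y1 \<noteq> y" using p pp by auto
  have "1 = (3::nat) \<and> (\<forall>i\<le>1. [x,y]!i = [x,y1,x1,y]!i)"
    by (rule paths_eq) (use e e1 ne L in \<open>simp_all add: walk_simps\<close>)
  then show False by simp
qed

definition f5 where "f5 x y p = a x (fst p) * a (fst p) (fst (snd p)) * a (fst (snd p)) (fst (snd (snd p)))
     * a (fst (snd (snd p))) (snd (snd (snd p))) * a (snd (snd (snd p))) y"

lemma nb5_flat': "nb5 x y = (\<Sum>p\<in>S5 x y. f5 x y p)"
  unfolding nb5_flat f5_def ..

lemma S5_elim:
  assumes "p \<in> S5 x y" "f5 x y p \<noteq> 0"
  obtains y1 x1 y2 x2 where "p = (y1,x1,y2,x2)" "E x y1" "E y1 x1" "E x1 y2" "E y2 x2" "E x2 y"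
    "x \<noteq> x1" "y1 \<noteq> y2" "x1 \<noteq> x2" "y2 \<noteq> y"
proof -
  obtain y1 x1 y2 x2 where pp: "p = (y1,x1,y2,x2)" by (cases p) auto
  have "E x y1 \<and> E y1 x1 \<and> E x1 y2 \<and> E y2 x2 \<and> E x2 y"
    using assms(2) pp unfolding f5_def by (intro prod5) simp
  moreover have "x \<noteq> x1" "y1 \<noteq> y2" "x1 \<noteq> x2" "y2 \<noteq> y" using assms(1) pp unfolding S5_def by auto
  ultimately show ?thesis using that pp by blast
qed

lemma f5_01: "f5 x y p = 0 \<or> f5 x y p = 1" unfolding f5_def by (rule prod5_01)

lemma nb5_01:
  assumes L: "10 \<le> L"
  shows "nb5 x y = 0 \<or> nb5 x y = 1"
  unfolding nb5_flat'
proof (rule sum01[OF finS5 f5_01])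
  fix p q assume p: "p \<in> S5 x y" and q: "q \<in> S5 x y" and fp: "f5 x y p = 1" and fq: "f5 x y q = 1"
  obtain y1 x1 y2 x2 where P: "p = (y1,x1,y2,x2)" "E x y1" "E y1 x1" "E x1 y2" "E y2 x2" "E x2 y"
    "x \<noteq> x1" "y1 \<noteq> y2" "x1 \<noteq> x2" "y2 \<noteq> y" by (rule S5_elim[OF p]) (use fp in simp_all)
  obtain y1' x1' y2' x2' where Q: "q = (y1',x1',y2',x2')" "E x y1'" "E y1' x1'" "E x1' y2'" "E y2' x2'" "E x2' y"
    "x \<noteq> x1'" "y1' \<noteq> y2'" "x1' \<noteq> x2'" "y2' \<noteq> y" by (rule S5_elim[OF q]) (use fq in simp_all)
  have "5 = (5::nat) \<and> (\<forall>i\<le>5. [x,y1,x1,y2,x2,y]!i = [x,y1',x1',y2',x2',y]!i)"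
    by (rule paths_eq) (use P Q L in \<open>simp_all add: walk_simps\<close>)
  then have h: "\<forall>i\<le>5. [x,y1,x1,y2,x2,y]!i = [x,y1',x1',y2',x2',y]!i" by simp
  have "y1 = y1'" using h[rule_format, of 1] by simp
  moreover have "x1 = x1'" using h[rule_format, of 2] by simp
  moreover have "y2 = y2'" using h[rule_format, of 3] by simp
  moreover have "x2 = x2'" using h[rule_format, of 4] by simp
  ultimately show "p = q" using P Q by simp
qed

lemma nb5_a:
  assumes L: "6 \<le> L"
  shows "nb5 x y * a x y = 0"
proof (rule ccontr)
  assume "nb5 x y * a x y \<noteq> 0"
  then have n: "nb5 x y \<noteq> 0" and e: "E x y" by (auto simp: a_def split: if_splits)
  from sum_ne0_ex[OF n[unfolded nb5_flat']] obtain p where p: "p \<in> S5 x y"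
    and fp: "f5 x y p \<noteq> 0" by blast
  obtain y1 x1 y2 x2 where P: "p = (y1,x1,y2,x2)" "E x y1" "E y1 x1" "E x1 y2" "E y2 x2" "E x2 y"
    "x \<noteq> x1" "y1 \<noteq> y2" "x1 \<noteq> x2" "y2 \<noteq> y" by (rule S5_elim[OF p fp])
  have "1 = (5::nat) \<and> (\<forall>i\<le>1. [x,y]!i = [x,y1,x1,y2,x2,y]!i)"
    by (rule paths_eq) (use e P L in \<open>simp_all add: walk_simps\<close>)
  then show False by simp
qed

lemma nb5_nb3:
  assumes L: "8 \<le> L"
  shows "nb5 x y * nb3 x y = 0"
proof (rule ccontr)
  assume "nb5 x y * nb3 x y \<noteq> 0"
  then have n: "nb5 x y \<noteq> 0" and n3: "nb3 x y \<noteq> 0" by auto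
  from sum_ne0_ex[OF n[unfolded nb5_flat']] obtain p where p: "p \<in> S5 x y"
    and fp: "f5 x y p \<noteq> 0" by blast
  obtain y1 x1 y2 x2 where P: "p = (y1,x1,y2,x2)" "E x y1" "E y1 x1" "E x1 y2" "E y2 x2" "E x2 y"
    "x \<noteq> x1" "y1 \<noteq> y2" "x1 \<noteq> x2" "y2 \<noteq> y" by (rule S5_elim[OF p fp])
  from sum_ne0_ex[OF n3[unfolded nb3_flat]] obtain q where q: "q \<in> (Y-{y}) \<times> (X-{x})"
    and fq: "a x (fst q) * a (fst q) (snd q) * a (snd q) y \<noteq> 0" by blast
  obtain z1 w1 where qq: "q = (z1, w1)" by (cases q)
  have e1: "E x z1 \<and> E z1 w1 \<and> E w1 y" using fq qq by (intro prod3) simp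
  have ne: "x \<noteq> w1" "z1 \<noteq> y" using q qq by auto
  have "3 = (5::nat) \<and> (\<forall>i\<le>3. [x,z1,w1,y]!i = [x,y1,x1,y2,x2,y]!i)"
    by (rule paths_eq) (use e1 ne P L in \<open>simp_all add: walk_simps\<close>)
  then show False by simp
qed

end


lemma mm_assoc:
  fixes f :: "'b \<Rightarrow> real"
  shows "(\<Sum>z\<in>A. f z * (\<Sum>y\<in>B. g z y * h y)) = (\<Sum>y\<in>B. (\<Sum>z\<in>A. f z * g z y) * h y)"
proof -
  have "(\<Sum>z\<in>A. f z * (\<Sum>y\<in>B. g z y * h y)) = (\<Sum>z\<in>A. \<Sum>y\<in>B. f z * g z y * h y)"
    by (simp add: sum_distrib_left mult.assoc)
  also have "\<dots> = (\<Sum>y\<in>B. \<Sum>z\<in>A. f z * g z y * h y)" by (rule sum.swap)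
  also have "\<dots> = (\<Sum>y\<in>B. (\<Sum>z\<in>A. f z * g z y) * h y)"
    by (simp add: sum_distrib_right)
  finally show ?thesis .
qed

lemma sum_le_card01:
  fixes f :: "'b \<Rightarrow> real"
  assumes fin: "finite S" and f1: "\<And>y. y \<in> S \<Longrightarrow> f y \<le> 1"
  shows "sum f S \<le> real (card S)" and "sum f S = real (card S) \<Longrightarrow> (\<And>y. y \<in> S \<Longrightarrow> f y = 1)"
proof -
  have "sum f S \<le> (\<Sum>y\<in>S. 1)" by (rule sum_mono) (use f1 in auto)
  then show "sum f S \<le> real (card S)" by simp
  assume eq: "sum f S = real (card S)"
  fix y assume y: "y \<in> S"
  have "(\<Sum>y\<in>S. 1 - f y) = 0" using eq by (simp add: sum_subtractf)
  then have "\<forall>y\<in>S. 1 - f y = 0" using fin f1 by (subst sum_nonneg_eq_0_iff[symmetric]) auto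
  then show "f y = 1" using y by auto
qed

context bbg begin

lemma Px_sym: "Px x x' = Px x' x"
  unfolding Px_def by (intro sum.cong refl) (simp add: a_sym mult.commute)

lemma rowPx: "x \<in> X \<Longrightarrow> (\<Sum>x'\<in>X. Px x x') = real m * real b"
proof -
  assume x: "x \<in> X"
  have "(\<Sum>x'\<in>X. Px x x') = (\<Sum>y\<in>Y. a x y * (\<Sum>x'\<in>X. a y x'))"
    unfolding Px_def by (subst sum.swap) (simp add: sum_distrib_left)
  also have "\<dots> = (\<Sum>y\<in>Y. a x y * real b)" by (intro sum.cong refl) (simp add: sumX_a)
  also have "\<dots> = real m * real b" using sumY_a[OF x] by (simp add: sum_distrib_right[symmetric])
  finally show ?thesis .
qed

lemma colPx: "x' \<in> X \<Longrightarrow> (\<Sum>x\<in>X. Px x x') = real m * real b"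
proof -
  assume x': "x' \<in> X"
  have "(\<Sum>x\<in>X. Px x x') = (\<Sum>x\<in>X. Px x' x)" by (intro sum.cong refl) (rule Px_sym)
  then show ?thesis using rowPx[OF x'] by simp
qed

lemma sumPN: "x \<in> X \<Longrightarrow> (\<Sum>y\<in>Y. PN x y) = real m * real b * real m"
proof -
  assume x: "x \<in> X"
  have "(\<Sum>y\<in>Y. PN x y) = (\<Sum>x'\<in>X. Px x x' * (\<Sum>y\<in>Y. a x' y))"
    unfolding PN_def by (subst sum.swap) (simp add: sum_distrib_left)
  also have "\<dots> = (\<Sum>x'\<in>X. Px x x' * real m)" by (intro sum.cong refl) (simp add: sumY_a)
  also have "\<dots> = real m * real b * real m" using rowPx[OF x] by (simp add: sum_distrib_right[symmetric])
  finally show ?thesis .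
qed

lemma sum_nb3: "x \<in> X \<Longrightarrow> (\<Sum>y\<in>Y. nb3 x y) = real m * (real m - 1) * (real b - 1)"
proof -
  assume x: "x \<in> X"
  have "(\<Sum>y\<in>Y. PN x y) = (\<Sum>y\<in>Y. nb3 x y) + (real m + real b - 1) * (\<Sum>y\<in>Y. a x y)"
    using I1[OF x] by (simp add: sum.distrib sum_distrib_left)
  then show ?thesis using sumPN[OF x] sumY_a[OF x] by (simp add: algebra_simps)
qed

lemma sumPnb3: "x \<in> X \<Longrightarrow> (\<Sum>y\<in>Y. Pnb3 x y) = real m * real b * (real m * (real m - 1) * (real b - 1))"
proof -
  assume x: "x \<in> X"
  have "(\<Sum>y\<in>Y. Pnb3 x y) = (\<Sum>x'\<in>X. Px x x' * (\<Sum>y\<in>Y. nb3 x' y))"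
    unfolding Pnb3_def by (subst sum.swap) (simp add: sum_distrib_left)
  also have "\<dots> = (\<Sum>x'\<in>X. Px x x' * (real m * (real m - 1) * (real b - 1)))"
    by (intro sum.cong refl) (simp add: sum_nb3)
  also have "\<dots> = real m * real b * (real m * (real m - 1) * (real b - 1))"
    using rowPx[OF x] by (simp add: sum_distrib_right[symmetric])
  finally show ?thesis .
qed

lemma sum_nb5: "x \<in> X \<Longrightarrow> (\<Sum>y\<in>Y. nb5 x y) = real m * ((real m - 1) * (real b - 1))^2"
proof -
  assume x: "x \<in> X"
  have "(\<Sum>y\<in>Y. Pnb3 x y) = (real m + real b - 2) * (\<Sum>y\<in>Y. nb3 x y) + (\<Sum>y\<in>Y. nb5 x y)
      + (real m - 1) * (real b - 1) * (\<Sum>y\<in>Y. a x y)"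
    using I2[OF x] by (simp add: sum.distrib sum_distrib_left)
  then show ?thesis using sumPnb3[OF x] sum_nb3[OF x] sumY_a[OF x]
    by (simp add: algebra_simps power2_eq_square)
qed

lemma P2_PN: "x \<in> X \<Longrightarrow> x' \<in> X \<Longrightarrow> (\<Sum>z\<in>X. Px x z * Px z x') = (\<Sum>y\<in>Y. PN x y * a y x')"
  unfolding Px_def[of _ x'] PN_def by (rule mm_assoc)

end


lemma sum_defl:
  fixes f g :: "'b \<Rightarrow> real"
  assumes "finite Z"
  shows "(\<Sum>z\<in>Z. (f z - \<alpha>) * (g z - \<beta>)) = (\<Sum>z\<in>Z. f z * g z) - \<beta> * sum f Z - \<alpha> * sum g Z + real (card Z) * \<alpha> * \<beta>"
  by (simp add: algebra_simps sum.distrib sum_subtractf sum_distrib_left)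

context bbg begin

lemma PN_tight8:
  assumes T: "\<And>x y. x \<in> X \<Longrightarrow> y \<in> Y \<Longrightarrow> a x y + nb3 x y = 1" and x: "x \<in> X" and y: "y \<in> Y"
  shows "PN x y = 1 + (real m + real b - 2) * a x y"
  using I1[OF x y] T[OF x y] by (simp add: algebra_simps)

lemma tight8:
  assumes T: "\<And>x y. x \<in> X \<Longrightarrow> y \<in> Y \<Longrightarrow> a x y + nb3 x y = 1"
    and n: "real (card X) = real b * (1 + (real m - 1) * (real b - 1))"
    and Xne: "X \<noteq> {}" and c0: "real m + real b - 2 \<noteq> 0" and b0: "b \<noteq> 0"
  shows "\<exists>t::nat. real t * (real m + real b - 2) = real m * real b * (real m - 1) * (real b - 1)"
proof -
  define c where "c = real m + real b - 2"
  define \<kappa> where "\<kappa> = real m * real b"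
  define nX where "nX = real (card X)"
  have nX0: "nX \<noteq> 0" using Xne finX unfolding nX_def by auto
  have key: "real m * nX = \<kappa>^2 - c * \<kappa>" unfolding nX_def n \<kappa>_def c_def
    by (simp add: algebra_simps power2_eq_square)
  have P2: "(\<Sum>z\<in>X. Px x z * Px z x') = real m + c * Px x x'" if x: "x \<in> X" and x': "x' \<in> X" for x x'
  proof -
    have "(\<Sum>z\<in>X. Px x z * Px z x') = (\<Sum>y\<in>Y. (1 + c * a x y) * a y x')"
      unfolding P2_PN[OF x x'] c_def by (intro sum.cong refl) (simp add: PN_tight8[OF T x])
    also have "\<dots> = (\<Sum>y\<in>Y. a y x') + c * Px x x'"
      unfolding Px_def by (simp add: algebra_simps sum.distrib sum_distrib_left)
    finally show ?thesis using sumY_a'[OF x'] by simp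
  qed
  define Ed where "Ed = (\<lambda>x x'. (Px x x' - \<kappa> / nX) / c)"
  have idem: "(\<Sum>z\<in>X. Ed x z * Ed z x') = Ed x x'" if x: "x \<in> X" and x': "x' \<in> X" for x x'
  proof -
    have "(\<Sum>z\<in>X. Ed x z * Ed z x') = (\<Sum>z\<in>X. (Px x z - \<kappa> / nX) * (Px z x' - \<kappa> / nX)) / c^2"
      unfolding Ed_def by (simp add: sum_divide_distrib power2_eq_square)
    also have "\<dots> = ((real m + c * Px x x') - \<kappa>/nX * (\<kappa>) - \<kappa>/nX * \<kappa> + nX * (\<kappa>/nX) * (\<kappa>/nX)) / c^2"
      by (simp add: sum_defl[OF finX] P2[OF x x'] rowPx[OF x] colPx[OF x'] \<kappa>_def nX_def)
    also have "\<dots> = Ed x x'"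
    proof -
      have mval: "real m = (\<kappa>*\<kappa> - c*\<kappa>)/nX" using key nX0 by (simp add: field_simps power2_eq_square)
      show ?thesis unfolding Ed_def mval using nX0 c0 unfolding c_def[symmetric]
        by (simp add: field_simps power2_eq_square)
    qed
    finally show ?thesis .
  qed
  have "(\<Sum>x\<in>X. Ed x x) \<in> \<nat>" by (rule idem_trace_nat[OF finX]) (use idem in auto)
  then obtain t :: nat where t: "(\<Sum>x\<in>X. Ed x x) = real t" by (auto elim!: Nats_cases)
  have "(\<Sum>x\<in>X. Ed x x) = (\<Sum>x\<in>X. (real m - \<kappa> / nX) / c)"
    unfolding Ed_def by (intro sum.cong refl) (simp add: Px_diag)
  also have "\<dots> = nX * (real m - \<kappa> / nX) / c" by (simp add: nX_def)
  finally have tt: "real t = nX * (real m - \<kappa> / nX) / c" using t by simp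
  have "nX * (real m - \<kappa> / nX) = nX * real m - \<kappa>" using nX0 by (simp add: right_diff_distrib)
  then have "real t * c = nX * real m - \<kappa>" using tt c0 unfolding c_def[symmetric] by simp
  then show ?thesis unfolding c_def nX_def n \<kappa>_def by (intro exI[of _ t]) (simp add: algebra_simps)
qed

lemma tight12:
  assumes L: "10 \<le> L"
    and T: "\<And>x y. x \<in> X \<Longrightarrow> y \<in> Y \<Longrightarrow> a x y + nb3 x y + nb5 x y = 1"
    and n: "real (card X) = real b * (1 + (real m - 1) * (real b - 1) + ((real m - 1) * (real b - 1))^2)"
    and Xne: "X \<noteq> {}"
    and p0: "(real m + real b - 1) * (real m + real b - 3) + 1 - (real m - 1) * (real b - 1) \<noteq> 0"
  shows "\<exists>t::nat. real t * ((real m + real b - 1) * (real m + real b - 3) + 1 - (real m - 1) * (real b - 1))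
     = (2 * real m + 2 * real b - 4) * (real (card X) * real m - real m * real b)
       - (real (card X) * (real m + real b - 1) * real m - (real m * real b)^2)"
proof -
  define c1 where "c1 = real m + real b - 1"
  define c2 where "c2 = real m + real b - 2"
  define c3 where "c3 = (real m - 1) * (real b - 1)"
  define s where "s = 2 * real m + 2 * real b - 4"
  define p where "p = (real m + real b - 1) * (real m + real b - 3) + 1 - (real m - 1) * (real b - 1)"
  define \<kappa> where "\<kappa> = real m * real b"
  define nX where "nX = real (card X)"
  have nX0: "nX \<noteq> 0" using Xne finX unfolding nX_def by auto
  have key: "real m * nX = \<kappa>^3 - s * \<kappa>^2 + p * \<kappa>" unfolding nX_def n \<kappa>_def s_def p_def
    by (simp add: algebra_simps power2_eq_square power3_eq_cube)
  have PNe: "PN x y = nb3 x y + c1 * a x y" if "x \<in> X" "y \<in> Y" for x y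
    using I1[OF that] unfolding c1_def by simp
  have P2Ne: "(\<Sum>x'\<in>X. Px x x' * PN x' y) = s * PN x y - p * a x y + 1" if x: "x \<in> X" and y: "y \<in> Y" for x y
  proof -
    have "(\<Sum>x'\<in>X. Px x x' * PN x' y) = (\<Sum>x'\<in>X. Px x x' * nb3 x' y + c1 * (Px x x' * a x' y))"
      by (intro sum.cong refl) (simp add: PNe[OF _ y] algebra_simps)
    also have "\<dots> = Pnb3 x y + c1 * PN x y"
      unfolding Pnb3_def PN_def by (simp add: sum.distrib sum_distrib_left)
    also have "Pnb3 x y = c2 * nb3 x y + (1 - a x y - nb3 x y) + c3 * a x y"
      using I2[OF x y] T[OF x y] unfolding c2_def c3_def by (simp add: algebra_simps)
    also have "nb3 x y = PN x y - c1 * a x y" using PNe[OF x y] by simp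
    finally show ?thesis unfolding s_def p_def c1_def c2_def c3_def by (simp add: algebra_simps)
  qed
  define P2 where "P2 = (\<lambda>x x'. \<Sum>z\<in>X. Px x z * Px z x')"
  define P3 where "P3 = (\<lambda>x x'. \<Sum>z\<in>X. Px x z * P2 z x')"
  have P2e: "P2 x x' = (\<Sum>y\<in>Y. PN x y * a y x')" if "x \<in> X" "x' \<in> X" for x x'
    unfolding P2_def using P2_PN[OF that] .
  have P3e: "P3 x x' = s * P2 x x' - p * Px x x' + real m" if x: "x \<in> X" and x': "x' \<in> X" for x x'
  proof -
    have "P3 x x' = (\<Sum>z\<in>X. Px x z * (\<Sum>y\<in>Y. PN z y * a y x'))"
      unfolding P3_def by (intro sum.cong refl) (simp add: P2e x')
    also have "\<dots> = (\<Sum>y\<in>Y. (\<Sum>z\<in>X. Px x z * PN z y) * a y x')" by (rule mm_assoc)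
    also have "\<dots> = (\<Sum>y\<in>Y. (s * PN x y - p * a x y + 1) * a y x')"
      by (intro sum.cong refl) (simp add: P2Ne x)
    also have "\<dots> = s * (\<Sum>y\<in>Y. PN x y * a y x') - p * Px x x' + (\<Sum>y\<in>Y. a y x')"
      unfolding Px_def by (simp add: algebra_simps sum.distrib sum_subtractf sum_distrib_left)
    finally show ?thesis using P2e[OF x x'] sumY_a'[OF x'] by simp
  qed
  have rowP2: "(\<Sum>x'\<in>X. P2 x x') = \<kappa>^2" if x: "x \<in> X" for x
  proof -
    have "(\<Sum>x'\<in>X. P2 x x') = (\<Sum>z\<in>X. Px x z * (\<Sum>x'\<in>X. Px z x'))"
      unfolding P2_def by (subst sum.swap) (simp add: sum_distrib_left)
    also have "\<dots> = (\<Sum>z\<in>X. Px x z * \<kappa>)" by (intro sum.cong refl) (simp add: rowPx \<kappa>_def)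
    finally show ?thesis using rowPx[OF x] by (simp add: sum_distrib_right[symmetric] \<kappa>_def power2_eq_square)
  qed
  have colP2: "(\<Sum>x\<in>X. P2 x x') = \<kappa>^2" if x': "x' \<in> X" for x'
  proof -
    have "(\<Sum>x\<in>X. P2 x x') = (\<Sum>x\<in>X. P2 x' x)"
      unfolding P2_def by (intro sum.cong refl) (simp add: Px_sym mult.commute)
    then show ?thesis using rowP2[OF x'] by simp
  qed
  define Z where "Z = (\<lambda>x x'. Px x x' - \<kappa> / nX)"
  define Z2 where "Z2 = (\<lambda>x x'. \<Sum>z\<in>X. Z x z * Z z x')"
  define Z3 where "Z3 = (\<lambda>x x'. \<Sum>z\<in>X. Z x z * Z2 z x')"
  have Z2e: "Z2 x x' = P2 x x' - \<kappa>^2 / nX" if x: "x \<in> X" and x': "x' \<in> X" for x x'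
  proof -
    have "Z2 x x' = P2 x x' - \<kappa>/nX * \<kappa> - \<kappa>/nX * \<kappa> + nX * (\<kappa>/nX) * (\<kappa>/nX)"
      unfolding Z2_def Z_def P2_def
      by (simp add: sum_defl[OF finX] rowPx[OF x] colPx[OF x'] \<kappa>_def nX_def)
    moreover have "nX * (\<kappa>/nX) = \<kappa>" using nX0 by simp
    then have f1: "nX * (\<kappa>/nX) * (\<kappa>/nX) = \<kappa>^2/nX" by (simp add: power2_eq_square)
    have f2: "\<kappa>/nX * \<kappa> = \<kappa>^2/nX" by (simp add: power2_eq_square)
    ultimately show ?thesis by (simp only: f1 f2)
  qed
  have Z3e: "Z3 x x' = s * Z2 x x' - p * Z x x'" if x: "x \<in> X" and x': "x' \<in> X" for x x'
  proof -
    have "Z3 x x' = (\<Sum>z\<in>X. (Px x z - \<kappa>/nX) * (P2 z x' - \<kappa>^2/nX))"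
      unfolding Z3_def Z_def by (intro sum.cong refl) (simp add: Z2e x')
    also have "\<dots> = P3 x x' - \<kappa>^2/nX * \<kappa> - \<kappa>/nX * \<kappa>^2 + nX * (\<kappa>/nX) * (\<kappa>^2/nX)"
      unfolding P3_def by (simp add: sum_defl[OF finX] rowPx[OF x] colP2[OF x'] \<kappa>_def nX_def)
    also have "\<dots> = P3 x x' - \<kappa>^3/nX"
    proof -
      have "nX * (\<kappa>/nX) = \<kappa>" using nX0 by simp
      then have f1: "nX * (\<kappa>/nX) * (\<kappa>^2/nX) = \<kappa>^3/nX" by (simp add: power2_eq_square power3_eq_cube)
      have f2: "\<kappa>^2/nX * \<kappa> = \<kappa>^3/nX" and f3: "\<kappa>/nX * \<kappa>^2 = \<kappa>^3/nX"
        by (simp_all add: power2_eq_square power3_eq_cube)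
      show ?thesis by (simp only: f1 f2 f3)
    qed
    also have "\<dots> = s * P2 x x' - p * Px x x' + (real m - \<kappa>^3/nX)" using P3e[OF x x'] by simp
    also have "real m - \<kappa>^3/nX = - (s * \<kappa>^2 / nX) + p * \<kappa> / nX"
    proof -
      have "real m = (\<kappa>^3 - s * \<kappa>^2 + p * \<kappa>) / nX" using key nX0 by (simp add: eq_divide_eq)
      then show ?thesis by (simp add: diff_divide_distrib add_divide_distrib)
    qed
    also have "s * P2 x x' - p * Px x x' + (- (s * \<kappa>^2 / nX) + p * \<kappa> / nX) = s * Z2 x x' - p * Z x x'"
      unfolding Z_def Z2e[OF x x'] by (simp add: right_diff_distrib)
    finally show ?thesis .
  qed
  have Z2eq: "Z2 x x' = (\<Sum>z\<in>X. Z x z * Z z x')" for x x' unfolding Z2_def by simp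
  have Z3eq: "Z3 x x' = (\<Sum>z\<in>X. Z x z * Z2 z x')" for x x' unfolding Z3_def by simp
  have Z2Z: "(\<Sum>z\<in>X. Z2 x z * Z z x') = Z3 x x'" for x x'
    unfolding Z2_def Z3_def by (rule mm_assoc[symmetric])
  have Z2Z2: "(\<Sum>z\<in>X. Z2 x z * Z2 z x') = (\<Sum>w\<in>X. Z x w * Z3 w x')" for x x'
    unfolding Z2_def Z3_def by (rule mm_assoc[symmetric])
  define Ed where "Ed = (\<lambda>x x'. (s * Z x x' - Z2 x x') / p)"
  have pp: "p \<noteq> 0" using p0 unfolding p_def .
  have idem: "(\<Sum>z\<in>X. Ed x z * Ed z x') = Ed x x'" if x: "x \<in> X" and x': "x' \<in> X" for x x'
  proof -
    define A where "A = (\<Sum>z\<in>X. Z x z * Z z x')"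
    define B where "B = (\<Sum>z\<in>X. Z x z * Z2 z x')"
    define C where "C = (\<Sum>z\<in>X. Z2 x z * Z z x')"
    define D where "D = (\<Sum>z\<in>X. Z2 x z * Z2 z x')"
    have "(\<Sum>z\<in>X. Ed x z * Ed z x') = (\<Sum>z\<in>X. (s * s * (Z x z * Z z x') - s * (Z x z * Z2 z x')
         - s * (Z2 x z * Z z x') + Z2 x z * Z2 z x') / (p * p))"
    proof (intro sum.cong refl)
      fix z
      have "Ed x z * Ed z x' = ((s * Z x z - Z2 x z) * (s * Z z x' - Z2 z x')) / (p * p)"
        unfolding Ed_def by simp
      also have "(s * Z x z - Z2 x z) * (s * Z z x' - Z2 z x') = s * s * (Z x z * Z z x') - s * (Z x z * Z2 z x')
         - s * (Z2 x z * Z z x') + Z2 x z * Z2 z x'" by (simp add: algebra_simps)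
      finally show "Ed x z * Ed z x' = (s * s * (Z x z * Z z x') - s * (Z x z * Z2 z x')
         - s * (Z2 x z * Z z x') + Z2 x z * Z2 z x') / (p * p)" .
    qed
    also have "\<dots> = (s * s * A - s * B - s * C + D) / (p * p)"
      unfolding A_def B_def C_def D_def sum_divide_distrib[symmetric]
      by (simp only: sum.distrib sum_subtractf sum_distrib_left)
    also have "A = Z2 x x'" unfolding A_def Z2eq ..
    also have "B = Z3 x x'" unfolding B_def Z3eq ..
    also have "C = Z3 x x'" unfolding C_def by (rule Z2Z)
    also have "D = s * Z3 x x' - p * Z2 x x'"
    proof -
      have "D = (\<Sum>w\<in>X. Z x w * (s * Z2 w x' - p * Z w x'))"
        unfolding D_def Z2Z2 by (intro sum.cong refl) (simp add: Z3e x')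
      also have "\<dots> = s * (\<Sum>w\<in>X. Z x w * Z2 w x') - p * (\<Sum>w\<in>X. Z x w * Z w x')"
        by (simp add: right_diff_distrib sum_subtractf sum_distrib_left mult.left_commute)
      finally show ?thesis unfolding Z3eq[symmetric] Z2eq[symmetric] .
    qed
    also have "Z3 x x' = s * Z2 x x' - p * Z x x'" by (rule Z3e[OF x x'])
    finally have "(\<Sum>z\<in>X. Ed x z * Ed z x') = (s * s * Z2 x x' - s * (s * Z2 x x' - p * Z x x')
        - s * (s * Z2 x x' - p * Z x x') + (s * (s * Z2 x x' - p * Z x x') - p * Z2 x x')) / (p * p)" .
    also have "\<dots> = (p * (s * Z x x' - Z2 x x')) / (p * p)" by (simp add: algebra_simps)
    also have "\<dots> = Ed x x'" unfolding Ed_def using pp by simp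
    finally show ?thesis .
  qed
  have "(\<Sum>x\<in>X. Ed x x) \<in> \<nat>" by (rule idem_trace_nat[OF finX]) (use idem in auto)
  then obtain t :: nat where t: "(\<Sum>x\<in>X. Ed x x) = real t" by (auto elim!: Nats_cases)
  have P2d: "P2 x x = c1 * real m" if x: "x \<in> X" for x
  proof -
    have "P2 x x = (\<Sum>y\<in>Y. (nb3 x y * a x y) + c1 * a x y)"
      unfolding P2e[OF x x] by (intro sum.cong refl) (simp add: PNe x a_sym[of _ x] algebra_simps a_sq)
    also have "\<dots> = c1 * real m" using nb3_a L sumY_a[OF x] by (simp add: sum.distrib sum_distrib_left[symmetric])
    finally show ?thesis .
  qed
  have "(\<Sum>x\<in>X. Ed x x) = (\<Sum>x\<in>X. (s * (real m - \<kappa>/nX) - (c1 * real m - \<kappa>^2/nX)) / p)"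
    unfolding Ed_def Z_def by (intro sum.cong refl) (simp add: Px_diag Z2e P2d)
  also have "\<dots> = nX * (s * (real m - \<kappa>/nX) - (c1 * real m - \<kappa>^2/nX)) / p" by (simp add: nX_def)
  also have "nX * (s * (real m - \<kappa>/nX) - (c1 * real m - \<kappa>^2/nX)) = s * (nX * real m - \<kappa>) - (nX * c1 * real m - \<kappa>^2)"
    using nX0 by (simp add: field_simps)
  finally have "real t * p = s * (nX * real m - \<kappa>) - (nX * c1 * real m - \<kappa>^2)" using t pp by (simp add: field_simps)
  then show ?thesis unfolding p_def s_def nX_def c1_def \<kappa>_def by blast
qed

end


lemma sum_eq_card01:
  fixes f :: "'b \<Rightarrow> real"
  assumes fin: "finite S" and f1: "\<And>y. y \<in> S \<Longrightarrow> f y \<le> 1"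
    and eq: "sum f S = real (card S)" and y: "y \<in> S"
  shows "f y = 1"
proof -
  have "(\<Sum>y\<in>S. 1 - f y) = 0" using eq by (simp add: sum_subtractf)
  then have "\<forall>y\<in>S. 1 - f y = 0" using fin f1 by (subst sum_nonneg_eq_0_iff[symmetric]) auto
  then show "f y = 1" using y by auto
qed

context bbg begin

lemma edge_count: "card X * m = card Y * b"
proof -
  have "(\<Sum>x\<in>X. \<Sum>y\<in>Y. a x y) = real (card X) * real m" by (simp add: sumY_a)
  moreover have "(\<Sum>x\<in>X. \<Sum>y\<in>Y. a x y) = real (card Y) * real b"
    by (subst sum.swap) (simp add: sumX_a')
  ultimately have "real (card X * m) = real (card Y * b)" by simp
  then show ?thesis by (simp only: of_nat_eq_iff)
qed

lemma cardV: "card V = card X + card Y"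
  using XYV XYd finX finY card_Un_disjoint by fastforce

lemma size_from_Y:
  assumes m0: "0 < m" and cop: "coprime m b" and Yb: "m * K0 \<le> card Y"
    and nt: "card Y = m * K0 \<Longrightarrow> False"
  shows "(m + b) * (K0 + 1) \<le> card V"
proof -
  have "m dvd card Y * b" using edge_count by (metis dvd_triv_right)
  then have "m dvd card Y" using cop by (simp add: coprime_dvd_mult_left_iff)
  then obtain k where k: "card Y = m * k" by (auto elim: dvdE)
  have "card X * m = k * b * m" using edge_count k by (simp add: ac_simps)
  then have kx: "card X = k * b" using m0 by simp
  have "K0 \<le> k" using Yb k m0 by simp
  moreover have "K0 \<noteq> k" using nt k by auto
  ultimately have "K0 + 1 \<le> k" by simp
  then have "(m + b) * (K0 + 1) \<le> (m + b) * k" by (rule mult_le_mono2)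
  also have "\<dots> = card V" using cardV k kx by (simp add: algebra_simps)
  finally show ?thesis .
qed

lemma bound8:
  assumes L: "6 \<le> L" and Xne: "X \<noteq> {}" and m1: "1 \<le> m" and b1: "1 \<le> b" and cop: "coprime m b"
    and c0: "real m + real b - 2 \<noteq> 0"
    and notight: "\<And>t::nat. real t * (real m + real b - 2) = real m * real b * (real m - 1) * (real b - 1) \<Longrightarrow> False"
  shows "(m + b) * ((1 + (m - 1) * (b - 1)) + 1) \<le> card V"
proof (rule size_from_Y)
  define K0 where "K0 = 1 + (m - 1) * (b - 1)"
  have K0r: "real K0 = 1 + (real m - 1) * (real b - 1)" unfolding K0_def using m1 b1 by (simp add: of_nat_diff)
  obtain x where x: "x \<in> X" using Xne by auto
  define f where "f = (\<lambda>x y. a x y + nb3 x y)"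
  have f1: "f x y \<le> 1" for x y
    using a01[of x y] nb3_01[OF L, of x y] nb3_a[of x y] L unfolding f_def by auto
  have sf: "(\<Sum>y\<in>Y. f x y) = real m * real K0" if "x \<in> X" for x
    unfolding f_def K0r using sumY_a[OF that] sum_nb3[OF that]
    by (simp add: sum.distrib algebra_simps)
  show "m * K0 \<le> card Y"
  proof -
    have "(\<Sum>y\<in>Y. f x y) \<le> real (card Y)" by (rule sum_le_card01(1)[OF finY]) (rule f1)
    then have "real (m * K0) \<le> real (card Y)" using sf[OF x] by simp
    then show ?thesis by (simp only: of_nat_le_iff)
  qed
  show "card Y = m * K0 \<Longrightarrow> False"
  proof -
    assume eq: "card Y = m * K0"
    have T: "a x y + nb3 x y = 1" if "x \<in> X" "y \<in> Y" for x y
    proof -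
      have eqs: "(\<Sum>y\<in>Y. f x y) = real (card Y)" using sf[OF that(1)] eq by simp
      have "f x y = 1" by (rule sum_eq_card01[OF finY _ eqs that(2)]) (rule f1)
      then show ?thesis unfolding f_def .
    qed
    have "card X * m = m * K0 * b" using edge_count eq by simp
    then have "card X = b * K0" using m1 by simp
    then have n: "real (card X) = real b * (1 + (real m - 1) * (real b - 1))" using K0r by simp
    from tight8[OF T n Xne c0] b1 obtain t :: nat where
      "real t * (real m + real b - 2) = real m * real b * (real m - 1) * (real b - 1)" by auto
    then show False by (rule notight)
  qed
qed (use m1 cop in auto)

lemma bound12:
  assumes L: "10 \<le> L" and Xne: "X \<noteq> {}" and m1: "1 \<le> m" and b1: "1 \<le> b" and cop: "coprime m b"
    and p0: "(real m + real b - 1) * (real m + real b - 3) + 1 - (real m - 1) * (real b - 1) \<noteq> 0"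
    and notight: "\<And>t::nat. real (card X) = real b * (1 + (real m - 1) * (real b - 1) + ((real m - 1) * (real b - 1))^2) \<Longrightarrow>
      real t * ((real m + real b - 1) * (real m + real b - 3) + 1 - (real m - 1) * (real b - 1))
     = (2 * real m + 2 * real b - 4) * (real (card X) * real m - real m * real b)
       - (real (card X) * (real m + real b - 1) * real m - (real m * real b)^2) \<Longrightarrow> False"
  shows "(m + b) * ((1 + (m - 1) * (b - 1) + ((m - 1) * (b - 1))^2) + 1) \<le> card V"
proof (rule size_from_Y)
  define K0 where "K0 = 1 + (m - 1) * (b - 1) + ((m - 1) * (b - 1))^2"
  have K0r: "real K0 = 1 + (real m - 1) * (real b - 1) + ((real m - 1) * (real b - 1))^2"
    unfolding K0_def using m1 b1 by (simp add: of_nat_diff)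
  obtain x where x: "x \<in> X" using Xne by auto
  define f where "f = (\<lambda>x y. a x y + nb3 x y + nb5 x y)"
  have f1: "f x y \<le> 1" for x y
    using a01[of x y] nb3_01[of x y] nb3_a[of x y] nb5_01[OF L, of x y] nb5_a[of x y] nb5_nb3[of x y] L
    unfolding f_def by auto
  have sf: "(\<Sum>y\<in>Y. f x y) = real m * real K0" if "x \<in> X" for x
    unfolding f_def K0r using sumY_a[OF that] sum_nb3[OF that] sum_nb5[OF that]
    by (simp add: sum.distrib algebra_simps power2_eq_square)
  show "m * K0 \<le> card Y"
  proof -
    have "(\<Sum>y\<in>Y. f x y) \<le> real (card Y)" by (rule sum_le_card01(1)[OF finY]) (rule f1)
    then have "real (m * K0) \<le> real (card Y)" using sf[OF x] by simp
    then show ?thesis by (simp only: of_nat_le_iff)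
  qed
  show "card Y = m * K0 \<Longrightarrow> False"
  proof -
    assume eq: "card Y = m * K0"
    have T: "a x y + nb3 x y + nb5 x y = 1" if "x \<in> X" "y \<in> Y" for x y
    proof -
      have eqs: "(\<Sum>y\<in>Y. f x y) = real (card Y)" using sf[OF that(1)] eq by simp
      have "f x y = 1" by (rule sum_eq_card01[OF finY _ eqs that(2)]) (rule f1)
      then show ?thesis unfolding f_def .
    qed
    have "card X * m = m * K0 * b" using edge_count eq by simp
    then have "card X = b * K0" using m1 by simp
    then have n: "real (card X) = real b * (1 + (real m - 1) * (real b - 1) + ((real m - 1) * (real b - 1))^2)"
      using K0r by simp
    from tight12[OF L T n Xne p0] obtain t :: nat where
      "real t * ((real m + real b - 1) * (real m + real b - 3) + 1 - (real m - 1) * (real b - 1))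
     = (2 * real m + 2 * real b - 4) * (real (card X) * real m - real m * real b)
       - (real (card X) * (real m + real b - 1) * real m - (real m * real b)^2)" by auto
    then show False by (rule notight[OF n])
  qed
qed (use m1 cop in auto)

end


lemma nt1:
  fixes m t :: nat
  assumes m3: "3 \<le> m"
    and h: "real t * (real m + real (m+1) - 2) = real m * real (m+1) * (real m - 1) * (real (m+1) - 1)"
  shows False
proof -
  define x :: int where "x = int m"
  have "real_of_int (int t * (x + (x+1) - 2)) = real_of_int (x * (x+1) * (x - 1) * ((x+1) - 1))"
    using h unfolding x_def by simp
  then have e: "int t * (x + (x+1) - 2) = x * (x+1) * (x - 1) * ((x+1) - 1)" by (simp only: of_int_eq_iff)
  define d :: int where "d = 2 * x - 1"
  define Q :: int where "Q = 8 * x ^ 3 + 4 * x ^ 2 - 6 * x - 3"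
  have e': "int t * d = x * (x+1) * (x - 1) * ((x+1) - 1)" using e unfolding d_def by simp
  have "d * (Q - 16 * int t) = d * Q - 16 * (int t * d)" by (simp add: algebra_simps)
  also have "\<dots> = d * Q - 16 * (x * (x+1) * (x - 1) * ((x+1) - 1))" using e' by simp
  also have "\<dots> = 3" unfolding d_def Q_def by (simp add: eval_nat_numeral algebra_simps)
  finally have "d dvd 3" by (metis dvd_triv_left)
  then have "d \<le> 3" by (rule zdvd_imp_le) simp
  then show False using m3 unfolding d_def x_def by simp
qed

lemma nt2:
  fixes m t :: nat
  assumes m3: "3 \<le> m"
    and h: "real t * (real m + real (m^2+1) - 2) = real m * real (m^2+1) * (real m - 1) * (real (m^2+1) - 1)"
  shows False
proof -
  define x :: int where "x = int m"
  have "real_of_int (int t * (x + (x^2+1) - 2)) = real_of_int (x * (x^2+1) * (x - 1) * ((x^2+1) - 1))"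
    using h unfolding x_def by simp
  then have e: "int t * (x + (x^2+1) - 2) = x * (x^2+1) * (x - 1) * ((x^2+1) - 1)" by (simp only: of_int_eq_iff)
  define d :: int where "d = x ^ 2 + x - 1"
  define M :: int where "M = x * (x^2+1) * (x - 1) * ((x^2+1) - 1)"
  define Q :: int where "Q = x ^ 4 - 2 * x ^ 3 + 4 * x ^ 2 - 7 * x + 11"
  have e': "int t * d = M" using e unfolding d_def M_def by (simp add: algebra_simps)
  define w where "w = Q - int t"
  have "d * w = d * Q - int t * d" unfolding w_def by (simp add: algebra_simps)
  also have "\<dots> = d * Q - M" using e' by simp
  also have "\<dots> = 18 * x - 11" unfolding d_def Q_def M_def by (simp add: eval_nat_numeral algebra_simps)
  finally have dw: "d * w = 18 * x - 11" .
  have "d * (29 * w - 324 + 18 * x * w) = 29 * (d * w) - 324 * d + 18 * x * (d * w)"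
    by (simp add: algebra_simps)
  also have "\<dots> = 5" unfolding dw unfolding d_def by (simp add: eval_nat_numeral algebra_simps)
  finally have "d dvd 5" by (metis dvd_triv_left)
  then have "d \<le> 5" by (rule zdvd_imp_le) simp
  moreover have "x * x \<ge> 3 * x" using m3 unfolding x_def by (simp add: mult_right_mono)
  ultimately show False using m3 unfolding d_def x_def by (simp add: power2_eq_square)
qed

lemma nt3:
  fixes m t :: nat and nX :: real
  assumes m3: "3 \<le> m"
    and n: "nX = real (m+1) * (1 + (real m - 1) * (real (m+1) - 1) + ((real m - 1) * (real (m+1) - 1))^2)"
    and h: "real t * ((real m + real (m+1) - 1) * (real m + real (m+1) - 3) + 1 - (real m - 1) * (real (m+1) - 1))
     = (2 * real m + 2 * real (m+1) - 4) * (nX * real m - real m * real (m+1))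
       - (nX * (real m + real (m+1) - 1) * real m - (real m * real (m+1))^2)"
  shows False
proof -
  define x :: int where "x = int m"
  define nI :: int where "nI = (x+1) * (1 + (x - 1) * ((x+1) - 1) + ((x - 1) * ((x+1) - 1))^2)"
  have nn: "nX = real_of_int nI" unfolding n nI_def x_def by simp
  have "real_of_int (int t * ((x + (x+1) - 1) * (x + (x+1) - 3) + 1 - (x - 1) * ((x+1) - 1)))
      = real_of_int ((2 * x + 2 * (x+1) - 4) * (nI * x - x * (x+1))
       - (nI * (x + (x+1) - 1) * x - (x * (x+1))^2))"
    using h unfolding nn x_def by (simp add: ac_simps)
  then have e: "int t * ((x + (x+1) - 1) * (x + (x+1) - 3) + 1 - (x - 1) * ((x+1) - 1))
      = (2 * x + 2 * (x+1) - 4) * (nI * x - x * (x+1)) - (nI * (x + (x+1) - 1) * x - (x * (x+1))^2)"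
    by (simp only: of_int_eq_iff)
  define p :: int where "p = 3 * x ^ 2 - 3 * x + 1"
  define N :: int where "N = (2 * x + 2 * (x+1) - 4) * (nI * x - x * (x+1)) - (nI * (x + (x+1) - 1) * x - (x * (x+1))^2)"
  define Q :: int where "Q = 18 * x ^ 5 - 18 * x ^ 4 - 6 * x ^ 3 + 27 * x ^ 2 - 7 * x - 7"
  have pe: "(x + (x+1) - 1) * (x + (x+1) - 3) + 1 - (x - 1) * ((x+1) - 1) = p"
    unfolding p_def by (simp add: eval_nat_numeral algebra_simps)
  have e': "int t * p = N" using e unfolding pe N_def .
  define w where "w = Q - 27 * int t"
  have "p * w = p * Q - 27 * (int t * p)" unfolding w_def by (simp add: algebra_simps)
  also have "\<dots> = p * Q - 27 * N" using e' by simp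
  also have "\<dots> = 14 * x - 7" unfolding p_def Q_def N_def nI_def
    by (simp add: eval_nat_numeral algebra_simps)
  finally have pw: "p * w = 14 * x - 7" .
  have "p * (28 - 3 * (2 * x - 1) * w) = 28 * p - 3 * (2 * x - 1) * (p * w)"
    by (simp add: algebra_simps)
  also have "\<dots> = 7" unfolding pw unfolding p_def by (simp add: eval_nat_numeral algebra_simps)
  finally have "p dvd 7" by (metis dvd_triv_left)
  then have "p \<le> 7" by (rule zdvd_imp_le) simp
  moreover have "x * x \<ge> 3 * x" using m3 unfolding x_def by (simp add: mult_right_mono)
  ultimately show False using m3 unfolding p_def x_def by (simp add: power2_eq_square)
qed


lemma coprime_sq1: "coprime (m::nat) (m^2 + 1)"
proof (rule coprimeI)
  fix c assume c1: "c dvd m" and c2: "c dvd m^2 + 1"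
  have "c dvd m^2" using c1 by (simp add: power2_eq_square)
  then have "c dvd (m^2 + 1) - m^2" using c2 by (rule dvd_diff_nat[rotated])
  then have "c dvd 1" by simp
  then show "is_unit c" by simp
qed

lemma from_bb:
  assumes bb: "bip_biregular V E m b g" and g1: "1 \<le> g"
  obtains X Y where "bbg V E X Y m b (g - 1)" "X \<noteq> {}"
proof -
  from bb obtain X Y where sg: "simple_graph V E" and XYV: "X \<union> Y = V" and XYd: "X \<inter> Y = {}"
    and bip: "\<forall>u v. E u v \<longrightarrow> (u \<in> X \<and> v \<in> Y) \<or> (u \<in> Y \<and> v \<in> X)"
    and dX: "\<forall>x\<in>X. Defs.degree V E x = m" and dY: "\<forall>y\<in>Y. Defs.degree V E y = b"
    and cyc: "\<exists>k. has_cycle_of_length V E k" and gir: "girth V E = g"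
    unfolding bip_biregular_def by blast
  have nocyc: "\<not> has_cycle_of_length V E k" if "3 \<le> k" "k \<le> g - 1" for k
  proof
    assume "has_cycle_of_length V E k"
    then have "girth V E \<le> k" unfolding girth_def by (rule Least_le)
    then show False using gir that g1 by simp
  qed
  have B: "bbg V E X Y m b (g - 1)"
    by (unfold_locales) (use sg XYV XYd bip dX dY nocyc in auto)
  from cyc obtain cs where cs: "is_cycle V E cs" unfolding has_cycle_of_length_def by blast
  have l3: "3 \<le> length cs" and all: "\<forall>i<length cs. E (cs!i) (cs!((i+1) mod length cs))"
    using cs unfolding is_cycle_def by auto
  have "cs \<noteq> []" using l3 by auto
  then have "E (cs ! 0) (cs ! 1)" using all[rule_format, of 0] l3 by simp
  then have "X \<noteq> {}" using bip by blast
  then show ?thesis using B that by blast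
qed

theorem mainTheorem8:
  fixes m :: nat
  assumes "m \<ge> 3"
  shows "(\<forall>(V :: 'a set) E. bip_biregular V E m (m + 1) 8 \<longrightarrow>
            card V \<ge> (2*m + 1) * (m^2 - m + 2))
       \<and> (\<forall>(V :: 'a set) E. bip_biregular V E m (m^2 + 1) 8 \<longrightarrow>
            card V \<ge> (m^2 + m + 1) * (m^3 - m^2 + 2))
       \<and> (\<forall>(V :: 'a set) E. bip_biregular V E m (m + 1) 12 \<longrightarrow>
            card V \<ge> (2*m + 1) * (m^4 - 2*m^3 + 2*m^2 - m + 2))"
proof (intro conjI allI impI)
  have m3: "3 \<le> m" using assms .
  then obtain k where mk: "m = k + 3" by (metis add.commute le_iff_add)
  fix V :: "'a set" and E
  {
    assume bb: "bip_biregular V E m (m + 1) 8"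
    obtain X Y where B: "bbg V E X Y m (m+1) (8 - 1)" and Xne: "X \<noteq> {}"
      using from_bb[OF bb] by auto
    interpret bbg V E X Y m "m+1" "8 - 1" by (rule B)
    have "(m + (m+1)) * ((1 + (m - 1) * ((m+1) - 1)) + 1) \<le> card V"
    proof (rule bound8)
      show "coprime m (m + 1)" by (rule coprime_add_one_right)
      show "real m + real (m + 1) - 2 \<noteq> 0" using m3 by simp
      fix t :: nat
      assume "real t * (real m + real (m + 1) - 2) = real m * real (m + 1) * (real m - 1) * (real (m + 1) - 1)"
      then show False using nt1[OF m3] by blast
    qed (use m3 Xne in auto)
    moreover have "(m + (m+1)) * ((1 + (m - 1) * ((m+1) - 1)) + 1) = (2*m + 1) * (m^2 - m + 2)"
      unfolding mk by (simp add: power2_eq_square algebra_simps)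
    ultimately show "card V \<ge> (2*m + 1) * (m^2 - m + 2)" by simp
  next
    assume bb: "bip_biregular V E m (m^2 + 1) 8"
    obtain X Y where B: "bbg V E X Y m (m^2+1) (8 - 1)" and Xne: "X \<noteq> {}"
      using from_bb[OF bb] by auto
    interpret bbg V E X Y m "m^2+1" "8 - 1" by (rule B)
    have "(m + (m^2+1)) * ((1 + (m - 1) * ((m^2+1) - 1)) + 1) \<le> card V"
    proof (rule bound8)
      show "coprime m (m^2 + 1)" by (rule coprime_sq1)
      have "real (m^2 + 1) \<ge> 1" by simp
      then show "real m + real (m^2 + 1) - 2 \<noteq> 0" using m3 by linarith
      fix t :: nat
      assume "real t * (real m + real (m^2 + 1) - 2) = real m * real (m^2 + 1) * (real m - 1) * (real (m^2 + 1) - 1)"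
      then show False using nt2[OF m3] by blast
    qed (use m3 Xne in auto)
    moreover have "(m + (m^2+1)) * ((1 + (m - 1) * ((m^2+1) - 1)) + 1) = (m^2 + m + 1) * (m^3 - m^2 + 2)"
      unfolding mk by (simp add: power2_eq_square power3_eq_cube algebra_simps)
    ultimately show "card V \<ge> (m^2 + m + 1) * (m^3 - m^2 + 2)" by simp
  next
    assume bb: "bip_biregular V E m (m + 1) 12"
    obtain X Y where B: "bbg V E X Y m (m+1) (12 - 1)" and Xne: "X \<noteq> {}"
      using from_bb[OF bb] by auto
    interpret bbg V E X Y m "m+1" "12 - 1" by (rule B)
    have "(m + (m+1)) * ((1 + (m - 1) * ((m+1) - 1) + ((m - 1) * ((m+1) - 1))^2) + 1) \<le> card V"
    proof (rule bound12)
      show "coprime m (m + 1)" by (rule coprime_add_one_right)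
      show "(real m + real (m + 1) - 1) * (real m + real (m + 1) - 3) + 1 - (real m - 1) * (real (m + 1) - 1) \<noteq> 0"
      proof -
        have "m * 1 \<le> m * m" using m3 by (intro mult_le_mono2) simp
        then have "real m \<le> real m * real m" by (metis mult.right_neutral of_nat_le_iff of_nat_mult)
        then have "real m * 3 \<le> real m * (real m * 3)" by simp
        then show ?thesis by (simp add: algebra_simps)
      qed
      fix t :: nat
      assume n: "real (card X) = real (m + 1) * (1 + (real m - 1) * (real (m + 1) - 1) + ((real m - 1) * (real (m + 1) - 1))\<^sup>2)"
        and h: "real t * ((real m + real (m + 1) - 1) * (real m + real (m + 1) - 3) + 1 - (real m - 1) * (real (m + 1) - 1)) =
       (2 * real m + 2 * real (m + 1) - 4) * (real (card X) * real m - real m * real (m + 1)) -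
       (real (card X) * (real m + real (m + 1) - 1) * real m - (real m * real (m + 1))\<^sup>2)"
      show False by (rule nt3[OF m3 n h])
    qed (use m3 Xne in auto)
    moreover have "(m + (m+1)) * ((1 + (m - 1) * ((m+1) - 1) + ((m - 1) * ((m+1) - 1))^2) + 1)
        = (2*m + 1) * (m^4 - 2*m^3 + 2*m^2 - m + 2)"
      unfolding mk by (simp add: power2_eq_square power3_eq_cube power4_eq_xxxx algebra_simps)
    ultimately show "card V \<ge> (2*m + 1) * (m^4 - 2*m^3 + 2*m^2 - m + 2)" by simp
  }
qed


end
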